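(* Assume the hypotheses of Lemma 3 and let $\mu=\mu^{\omega^0}$ be the infinite-volume limit measure. There exist constants $C,c>0$ such that for all finite disjoint sets $W,U\subset V$ and all events $A\in\mathcal F_W$, $B\in\mathcal F_U$ which are of polymer type (with supporting sets $W$ and $U$ respectively), $$|\mu(A\cap B)-\mu(A)\mu(B)|\le \exp\bigl(C|W|e^{-c\,\mathrm{dist}(W,U)}\bigr)-1,$$ where $\mathrm{dist}$ is the graph distance between the sets.
   Context: $\mathcal T^d=(V,E)$ is the Cayley tree of order $d$; $p$-SOS model with spins in $\mathbb Z$; $\mathcal F_W$ is the $\sigma$-algebra generated by $(\sigma_v)_{v\in W}$. The inner boundary of $W$ is the set of vertices of $W$ having a neighbour outside $W$. An event $A\in\mathcal F_W$ is of polymer type with supporting set $W$ (relative to $\omega^0$) if $\omega\in A$ implies $\omega_v=\omega^0_v$ for every $v$ in the inner boundary of $W$. The hypotheses of Lemma 3: $\omega^0\in\mathbb Z^V$ and $\beta>0$ satisfy $\beta(H(\omega)-H(\omega^0))\ge\eta\sum_v|\omega_v-\omega^0_v|^p$ for all $\omega$ differing from $\omega^0$ at finitely many sites, with $\eta\ge\eta_1(d,p)$ large enough; $\mu^{\omega^0}$ is the weak limit of the finite-volume Gibbs measures with boundary condition $\omega^0$. *)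

theory Defs
  imports "HOL-Probability.Probability"
begin

text \<open>Vertices are words: the root is the empty list; the root has the d+1 children
  [0],...,[d]; every other vertex xs has the d children xs@[0],...,xs@[d-1].
  Hence every vertex has exactly d+1 neighbours.\<close>

definition tree_V :: "nat \<Rightarrow> nat list set" where
  "tree_V d = {xs. (xs \<noteq> [] \<longrightarrow> hd xs \<le> d) \<and> (\<forall>x\<in>set (tl xs). x < d)}"

definition tree_adj :: "nat \<Rightarrow> nat list \<Rightarrow> nat list \<Rightarrow> bool" where
  "tree_adj d x y \<longleftrightarrow> x \<in> tree_V d \<and> y \<in> tree_V d \<and> (\<exists>i. y = x @ [i] \<or> x = y @ [i])"

text \<open>Each (undirected) edge, represented once as a (parent, child) pair.\<close>
definition tree_edges :: "nat \<Rightarrow> (nat list \<times> nat list) set" where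
  "tree_edges d = {(x, y). x \<in> tree_V d \<and> y \<in> tree_V d \<and> (\<exists>i. y = x @ [i])}"

definition gdist :: "nat \<Rightarrow> nat list \<Rightarrow> nat list \<Rightarrow> nat" where
  "gdist d x y = (LEAST n. (x, y) \<in> {(a, b). tree_adj d a b} ^^ n)"

definition set_dist :: "nat \<Rightarrow> nat list set \<Rightarrow> nat list set \<Rightarrow> nat" where
  "set_dist d W U = Min {gdist d x y | x y. x \<in> W \<and> y \<in> U}"

definition ball :: "nat \<Rightarrow> nat \<Rightarrow> nat list set" where
  "ball d n = {v \<in> tree_V d. length v \<le> n}"

definition config_space :: "nat \<Rightarrow> (nat list \<Rightarrow> int) set" where
  "config_space d = PiE (tree_V d) (\<lambda>_. UNIV)"

definition config_M :: "nat \<Rightarrow> (nat list \<Rightarrow> int) measure" where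
  "config_M d = PiM (tree_V d) (\<lambda>_. count_space UNIV)"

definition F_sets :: "nat \<Rightarrow> nat list set \<Rightarrow> (nat list \<Rightarrow> int) set set" where
  "F_sets d W = {A. \<exists>B. A = {\<omega> \<in> config_space d. restrict \<omega> W \<in> B}}"

definition inner_boundary :: "nat \<Rightarrow> nat list set \<Rightarrow> nat list set" where
  "inner_boundary d W = {v \<in> W. \<exists>u. tree_adj d v u \<and> u \<notin> W}"

definition polymer_event ::
  "nat \<Rightarrow> (nat list \<Rightarrow> int) \<Rightarrow> nat list set \<Rightarrow> (nat list \<Rightarrow> int) set \<Rightarrow> bool" where
  "polymer_event d \<omega>0 W A \<longleftrightarrow>
     A \<in> F_sets d W \<and> (\<forall>\<omega>\<in>A. \<forall>v\<in>inner_boundary d W. \<omega> v = \<omega>0 v)"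

text \<open>H(omega) - H(omega0) = sum over edges of |omega_x - omega_y|^p - |omega0_x - omega0_y|^p,
  for omega differing from omega0 at finitely many sites (only edges touching the
  set of differences contribute).\<close>
definition H_diff :: "nat \<Rightarrow> real \<Rightarrow> (nat list \<Rightarrow> int) \<Rightarrow> (nat list \<Rightarrow> int) \<Rightarrow> real" where
  "H_diff d p \<omega> \<omega>0 =
     (\<Sum>(x, y)\<in>{(x, y) \<in> tree_edges d. \<omega> x \<noteq> \<omega>0 x \<or> \<omega> y \<noteq> \<omega>0 y}.
        real_of_int \<bar>\<omega> x - \<omega> y\<bar> powr p - real_of_int \<bar>\<omega>0 x - \<omega>0 y\<bar> powr p)"

definition fv_configs :: "nat \<Rightarrow> (nat list \<Rightarrow> int) \<Rightarrow> nat list set \<Rightarrow> (nat list \<Rightarrow> int) set" where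
  "fv_configs d \<omega>0 \<Lambda> = {\<sigma> \<in> config_space d. \<forall>v \<in> tree_V d - \<Lambda>. \<sigma> v = \<omega>0 v}"

definition gibbs_weight :: "nat \<Rightarrow> real \<Rightarrow> real \<Rightarrow> (nat list \<Rightarrow> int) \<Rightarrow> (nat list \<Rightarrow> int) \<Rightarrow> real" where
  "gibbs_weight d p \<beta> \<omega>0 \<sigma> = exp (- \<beta> * H_diff d p \<sigma> \<omega>0)"

definition gibbs_prob ::
  "nat \<Rightarrow> real \<Rightarrow> real \<Rightarrow> (nat list \<Rightarrow> int) \<Rightarrow> nat list set \<Rightarrow> (nat list \<Rightarrow> int) set \<Rightarrow> real" where
  "gibbs_prob d p \<beta> \<omega>0 \<Lambda> A =
     infsum (gibbs_weight d p \<beta> \<omega>0) (fv_configs d \<omega>0 \<Lambda> \<inter> A)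
     / infsum (gibbs_weight d p \<beta> \<omega>0) (fv_configs d \<omega>0 \<Lambda>)"

end

theory Submission
  imports Defs
begin


definition mixc :: "nat list set \<Rightarrow> (nat list\<Rightarrow>int) \<Rightarrow> (nat list\<Rightarrow>int) \<Rightarrow> nat list \<Rightarrow> int" where
  "mixc K f g = (\<lambda>v. if v \<in> K then f v else g v)"

definition dset :: "(nat list\<Rightarrow>int) \<Rightarrow> (nat list\<Rightarrow>int) \<Rightarrow> nat list set" where
  "dset \<omega>0 \<sigma> = {v. \<sigma> v \<noteq> \<omega>0 v}"

lemma tree_adj_sym: "tree_adj d x y \<Longrightarrow> tree_adj d y x"
  unfolding tree_adj_def by blast

lemma snoc_in_V: "x @ [i] \<in> tree_V d \<Longrightarrow> i \<le> d"
  unfolding tree_V_def by (cases x) auto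

lemma edges_adj: "(x,y) \<in> tree_edges d \<Longrightarrow> tree_adj d x y"
  unfolding tree_edges_def tree_adj_def by auto

lemma edges_touch_finite:
  assumes "finite D"
  shows "finite {(x,y) \<in> tree_edges d. x \<in> D \<or> y \<in> D}"
proof -
  have "{(x,y) \<in> tree_edges d. x \<in> D \<or> y \<in> D} \<subseteq>
     (\<Union>x\<in>D. {x} \<times> ((\<lambda>i. x@[i]) ` {..d})) \<union> ((\<lambda>y. (butlast y, y)) ` D)"
  proof
    fix e assume "e \<in> {(x,y) \<in> tree_edges d. x \<in> D \<or> y \<in> D}"
    then obtain x y i where e: "e = (x,y)" "y = x@[i]" "y \<in> tree_V d" "x \<in> D \<or> y \<in> D"
      unfolding tree_edges_def by auto
    then have "i \<le> d" using snoc_in_V by blast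
    then show "e \<in> (\<Union>x\<in>D. {x} \<times> ((\<lambda>i. x@[i]) ` {..d})) \<union> ((\<lambda>y. (butlast y, y)) ` D)"
      using e by (force simp: image_iff)
  qed
  moreover have "finite ((\<Union>x\<in>D. {x} \<times> ((\<lambda>i. x@[i]) ` {..d})) \<union> ((\<lambda>y. (butlast y, y)) ` D))"
    using assms by auto
  ultimately show ?thesis by (rule finite_subset)
qed

definition Eset :: "nat \<Rightarrow> (nat list\<Rightarrow>int) \<Rightarrow> (nat list\<Rightarrow>int) \<Rightarrow> (nat list \<times> nat list) set" where
  "Eset d \<sigma> \<omega>0 = {(x, y) \<in> tree_edges d. \<sigma> x \<noteq> \<omega>0 x \<or> \<sigma> y \<noteq> \<omega>0 y}"

lemma Eset_finite: "finite (dset \<omega>0 \<sigma>) \<Longrightarrow> finite (Eset d \<sigma> \<omega>0)"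
  by (rule finite_subset[OF _ edges_touch_finite[of "dset \<omega>0 \<sigma>" d]])
     (auto simp: Eset_def dset_def)

lemma H_diff_Eset: "H_diff d p \<sigma> \<omega>0 = (\<Sum>(x, y)\<in>Eset d \<sigma> \<omega>0.
        real_of_int \<bar>\<sigma> x - \<sigma> y\<bar> powr p - real_of_int \<bar>\<omega>0 x - \<omega>0 y\<bar> powr p)"
  unfolding H_diff_def Eset_def by simp

lemma H_split:
  assumes fin: "finite (dset \<omega>0 \<sigma>)"
    and clos: "\<And>a b. a \<in> K \<Longrightarrow> a \<in> dset \<omega>0 \<sigma> \<Longrightarrow> b \<in> dset \<omega>0 \<sigma> \<Longrightarrow> tree_adj d a b \<Longrightarrow> b \<in> K"
  shows "H_diff d p \<sigma> \<omega>0 = H_diff d p (mixc K \<sigma> \<omega>0) \<omega>0 + H_diff d p (mixc K \<omega>0 \<sigma>) \<omega>0"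
proof -
  define g where "g f = (\<lambda>(x,y). real_of_int \<bar>f x - f y\<bar> powr p - real_of_int \<bar>\<omega>0 x - \<omega>0 y\<bar> powr p)"
    for f :: "nat list \<Rightarrow> int"
  let ?s1 = "mixc K \<sigma> \<omega>0" and ?s2 = "mixc K \<omega>0 \<sigma>"
  have E: "Eset d \<sigma> \<omega>0 = Eset d ?s1 \<omega>0 \<union> Eset d ?s2 \<omega>0"
    unfolding Eset_def mixc_def by auto
  have disj: "Eset d ?s1 \<omega>0 \<inter> Eset d ?s2 \<omega>0 = {}"
  proof (rule ccontr)
    assume "Eset d ?s1 \<omega>0 \<inter> Eset d ?s2 \<omega>0 \<noteq> {}"
    then obtain x y where xy: "(x,y) \<in> Eset d ?s1 \<omega>0" "(x,y) \<in> Eset d ?s2 \<omega>0" by auto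
    then have adj: "tree_adj d x y" "tree_adj d y x"
      using edges_adj tree_adj_sym unfolding Eset_def by auto
    show False using xy clos[of x y] clos[of y x] adj unfolding Eset_def mixc_def dset_def
      by (auto split: if_splits)
  qed
  have fin1: "finite (Eset d ?s1 \<omega>0)" "finite (Eset d ?s2 \<omega>0)"
    using Eset_finite[OF fin] E by (auto intro: finite_subset)
  have "H_diff d p \<sigma> \<omega>0 = sum (g \<sigma>) (Eset d \<sigma> \<omega>0)"
    unfolding H_diff_Eset g_def by simp
  also have "\<dots> = sum (g \<sigma>) (Eset d ?s1 \<omega>0) + sum (g \<sigma>) (Eset d ?s2 \<omega>0)"
    unfolding E using fin1 disj by (rule sum.union_disjoint)
  also have "sum (g \<sigma>) (Eset d ?s1 \<omega>0) = sum (g ?s1) (Eset d ?s1 \<omega>0)"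
  proof (rule sum.cong[OF refl])
    fix e assume e: "e \<in> Eset d ?s1 \<omega>0"
    obtain x y where xy: "e = (x,y)" by force
    have adj: "tree_adj d x y" "tree_adj d y x"
      using e xy edges_adj tree_adj_sym unfolding Eset_def by auto
    have "\<sigma> x = ?s1 x \<and> \<sigma> y = ?s1 y"
      using e xy clos[of x y] clos[of y x] adj unfolding Eset_def mixc_def dset_def
      by (auto split: if_splits)
    then show "g \<sigma> e = g ?s1 e" unfolding g_def xy by simp
  qed
  also have "sum (g \<sigma>) (Eset d ?s2 \<omega>0) = sum (g ?s2) (Eset d ?s2 \<omega>0)"
  proof (rule sum.cong[OF refl])
    fix e assume e: "e \<in> Eset d ?s2 \<omega>0"
    obtain x y where xy: "e = (x,y)" by force
    have adj: "tree_adj d x y" "tree_adj d y x"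
      using e xy edges_adj tree_adj_sym unfolding Eset_def by auto
    have "\<sigma> x = ?s2 x \<and> \<sigma> y = ?s2 y"
      using e xy clos[of x y] clos[of y x] adj unfolding Eset_def mixc_def dset_def
      by (auto split: if_splits)
    then show "g \<sigma> e = g ?s2 e" unfolding g_def xy by simp
  qed
  finally show ?thesis unfolding H_diff_Eset g_def by simp
qed

lemma w_split:
  assumes fin: "finite (dset \<omega>0 \<sigma>)"
    and clos: "\<And>a b. a \<in> K \<Longrightarrow> a \<in> dset \<omega>0 \<sigma> \<Longrightarrow> b \<in> dset \<omega>0 \<sigma> \<Longrightarrow> tree_adj d a b \<Longrightarrow> b \<in> K"
  shows "gibbs_weight d p \<beta> \<omega>0 \<sigma> = gibbs_weight d p \<beta> \<omega>0 (mixc K \<sigma> \<omega>0) * gibbs_weight d p \<beta> \<omega>0 (mixc K \<omega>0 \<sigma>)"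
proof -
  have h: "H_diff d p \<sigma> \<omega>0 = H_diff d p (mixc K \<sigma> \<omega>0) \<omega>0 + H_diff d p (mixc K \<omega>0 \<sigma>) \<omega>0"
    by (rule H_split[OF assms])
  show ?thesis unfolding gibbs_weight_def h by (simp add: distrib_left exp_add[symmetric])
qed

lemma w_self: "gibbs_weight d p \<beta> \<omega>0 \<omega>0 = 1"
  unfolding gibbs_weight_def H_diff_def by simp



lemma infsum_le_subset:
  fixes f :: "'a \<Rightarrow> real"
  assumes "f summable_on B" "A \<subseteq> B" "\<And>x. x \<in> B \<Longrightarrow> f x \<ge> 0"
  shows "infsum f A \<le> infsum f B"
  using assms by (intro infsum_mono2) (auto intro: summable_on_subset_banach)

lemma pair_summable:
  fixes f :: "'a \<Rightarrow> real" and g :: "'b \<Rightarrow> real"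
  assumes f: "f summable_on A" "\<And>x. x \<in> A \<Longrightarrow> f x \<ge> 0"
    and g: "g summable_on B" "\<And>x. x \<in> B \<Longrightarrow> g x \<ge> 0"
  shows "(\<lambda>(x,y). f x * g y) summable_on (A \<times> B)"
proof (rule nonneg_bdd_above_summable_on)
  show "\<And>z. z \<in> A \<times> B \<Longrightarrow> 0 \<le> (\<lambda>(x,y). f x * g y) z" using f g by auto
  show "bdd_above (sum (\<lambda>(x,y). f x * g y) ` {F. F \<subseteq> A \<times> B \<and> finite F})"
  proof (rule bdd_aboveI2)
    fix F assume F: "F \<in> {F. F \<subseteq> A \<times> B \<and> finite F}"
    then have fin: "finite (fst ` F)" "finite (snd ` F)" and sub: "fst ` F \<subseteq> A" "snd ` F \<subseteq> B"
      by auto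
    have "sum (\<lambda>(x,y). f x * g y) F \<le> sum (\<lambda>(x,y). f x * g y) (fst ` F \<times> snd ` F)"
    proof (rule sum_mono2)
      show "finite (fst ` F \<times> snd ` F)" using fin by simp
      show "F \<subseteq> fst ` F \<times> snd ` F" by force
      fix z assume "z \<in> fst ` F \<times> snd ` F - F"
      then obtain a b where z: "z = (a,b)" "a \<in> A" "b \<in> B" using sub by (force simp: image_iff)
      show "0 \<le> (\<lambda>(x,y). f x * g y) z" using z f g by simp
    qed
    also have "\<dots> = sum f (fst ` F) * sum g (snd ` F)"
      by (simp add: sum_product sum.cartesian_product)
    also have "\<dots> \<le> infsum f A * infsum g B"
      by (intro mult_mono finite_sum_le_infsum) (use fin sub f g in \<open>auto intro!: sum_nonneg infsum_nonneg\<close>)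
    finally show "sum (\<lambda>(x,y). f x * g y) F \<le> infsum f A * infsum g B" .
  qed
qed

lemma pair_infsum:
  fixes f :: "'a \<Rightarrow> real" and g :: "'b \<Rightarrow> real"
  assumes f: "f summable_on A" "\<And>x. x \<in> A \<Longrightarrow> f x \<ge> 0"
    and g: "g summable_on B" "\<And>x. x \<in> B \<Longrightarrow> g x \<ge> 0"
  shows "infsum (\<lambda>(x,y). f x * g y) (A \<times> B) = infsum f A * infsum g B"
proof -
  have "infsum (\<lambda>(x,y). f x * g y) (A \<times> B) = infsum (\<lambda>x. infsum (\<lambda>y. f x * g y) B) A"
    using infsum_Sigma_banach[OF pair_summable[OF assms]] by simp
  also have "\<dots> = infsum (\<lambda>x. f x * infsum g B) A"
    by (rule infsum_cong) (use g in \<open>simp add: infsum_cmult_right\<close>)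
  also have "\<dots> = infsum f A * infsum g B"
    by (rule infsum_cmult_left) (use f in simp)
  finally show ?thesis .
qed

lemma PiE_prod_summable:
  fixes f :: "'a \<Rightarrow> 'b \<Rightarrow> real"
  assumes fin: "finite A"
    and nn: "\<And>x y. x \<in> A \<Longrightarrow> y \<in> B x \<Longrightarrow> f x y \<ge> 0"
    and sm: "\<And>x. x \<in> A \<Longrightarrow> f x summable_on B x"
  shows "(\<lambda>g. \<Prod>x\<in>A. f x (g x)) summable_on (PiE A B)"
proof (rule nonneg_bdd_above_summable_on)
  show "\<And>g. g \<in> PiE A B \<Longrightarrow> 0 \<le> (\<Prod>x\<in>A. f x (g x))"
    using nn by (auto intro: prod_nonneg)
  show "bdd_above (sum (\<lambda>g. \<Prod>x\<in>A. f x (g x)) ` {F. F \<subseteq> PiE A B \<and> finite F})"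
  proof (rule bdd_aboveI2)
    fix P assume "P \<in> {F. F \<subseteq> PiE A B \<and> finite F}"
    then have P: "P \<subseteq> PiE A B" "finite P" by auto
    define B' where "B' x = {p x| p. p\<in>P}" for x
    have fin_B'[simp]: "finite (B' x)" for x
      using P by (auto simp: B'_def)
    have PB': "P \<subseteq> PiE A B'"
      using P by (auto simp: B'_def)
    have B'B: "B' x \<subseteq> B x" if "x \<in> A" for x
      unfolding B'_def using P that by auto
    have "(\<Sum>g\<in>P. \<Prod>x\<in>A. f x (g x)) \<le> (\<Sum>g\<in>PiE A B'. \<Prod>x\<in>A. f x (g x))"
    proof (rule sum_mono2)
      show "finite (PiE A B')" using fin by (simp add: finite_PiE)
      show "P \<subseteq> PiE A B'" by (rule PB')
      fix g assume "g \<in> PiE A B' - P"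
      then have "\<And>x. x \<in> A \<Longrightarrow> g x \<in> B x" using B'B by (auto simp: PiE_iff)
      then show "0 \<le> (\<Prod>x\<in>A. f x (g x))" using nn by (auto intro!: prod_nonneg)
    qed
    also have "\<dots> = (\<Prod>x\<in>A. \<Sum>y\<in>B' x. f x y)"
      by (rule prod_sum_PiE[symmetric]) (use fin in auto)
    also have "\<dots> \<le> (\<Prod>x\<in>A. infsum (f x) (B x))"
      by (rule prod_mono) (use nn B'B sm in \<open>auto intro!: sum_nonneg finite_sum_le_infsum\<close>)
    finally show "(\<Sum>g\<in>P. \<Prod>x\<in>A. f x (g x)) \<le> (\<Prod>x\<in>A. infsum (f x) (B x))" .
  qed
qed

lemma PiE_prod_infsum:
  fixes f :: "'a \<Rightarrow> 'b \<Rightarrow> real"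
  assumes fin: "finite A"
    and nn: "\<And>x y. x \<in> A \<Longrightarrow> y \<in> B x \<Longrightarrow> f x y \<ge> 0"
    and sm: "\<And>x. x \<in> A \<Longrightarrow> f x summable_on B x"
  shows "infsum (\<lambda>g. \<Prod>x\<in>A. f x (g x)) (PiE A B) = (\<Prod>x\<in>A. infsum (f x) (B x))"
proof (rule infsum_prod_PiE[OF fin sm PiE_prod_summable[OF fin nn sm]])
qed

lemma infsum_Union_le:
  fixes f :: "'a \<Rightarrow> real"
  assumes fin: "finite I"
    and nn: "\<And>x. f x \<ge> 0"
    and sm: "\<And>i. i \<in> I \<Longrightarrow> f summable_on (S i)"
  shows "f summable_on (\<Union>i\<in>I. S i) \<and> infsum f (\<Union>i\<in>I. S i) \<le> (\<Sum>i\<in>I. infsum f (S i))"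
  using fin sm
proof (induction I rule: finite_induct)
  case empty
  then show ?case by simp
next
  case (insert i I)
  let ?U = "\<Union>i\<in>I. S i"
  have IH: "f summable_on ?U" "infsum f ?U \<le> (\<Sum>i\<in>I. infsum f (S i))"
    using insert by auto
  have si: "f summable_on S i" using insert by auto
  have eq: "(\<Union>j\<in>insert i I. S j) = S i \<union> (?U - S i)" by auto
  have s2: "f summable_on (?U - S i)"
    using IH(1) by (rule summable_on_subset_banach) auto
  have sm: "f summable_on (\<Union>j\<in>insert i I. S j)"
    unfolding eq by (rule summable_on_Un_disjoint[OF si s2]) auto
  have "infsum f (\<Union>j\<in>insert i I. S j) = infsum f (S i) + infsum f (?U - S i)"
    unfolding eq by (rule infsum_Un_disjoint[OF si s2]) auto
  also have "infsum f (?U - S i) \<le> infsum f ?U"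
    by (rule infsum_le_subset[OF IH(1)]) (use nn in auto)
  finally show ?case using IH(2) sm insert.hyps by simp
qed



lemma exp_neg_powr_bound:
  fixes p :: real and n :: nat and m :: nat
  assumes p: "p > 0" and m: "m \<ge> 1" "real m * p \<ge> 2" and n: "n \<ge> 1"
  shows "exp (- (real n powr p)) \<le> real m ^ m * inverse (real n ^ 2)"
proof -
  define t where "t = real n powr p"
  have t0: "t > 0" using n by (simp add: t_def)
  have "t / m \<le> exp (t / m)"
    using exp_ge_add_one_self[of "t/m"] by linarith
  then have "(t / m) ^ m \<le> exp (t / m) ^ m"
    by (rule power_mono) (use t0 m in simp)
  also have "exp (t / m) ^ m = exp t"
    using m by (simp add: exp_of_nat_mult[symmetric])
  finally have le: "(t / m) ^ m \<le> exp t" .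
  have tm: "t ^ m = real n powr (p * m)"
    unfolding t_def using n by (simp add: powr_realpow[symmetric] powr_powr)
  have "real n powr 2 \<le> real n powr (p * m)"
    by (rule powr_mono) (use m n in \<open>auto simp: mult.commute\<close>)
  then have n2: "real n ^ 2 \<le> t ^ m" using n tm by (simp add: powr_realpow)
  have "exp (- t) = inverse (exp t)" by (simp add: exp_minus)
  also have "\<dots> \<le> inverse ((t / m) ^ m)"
    by (rule le_imp_inverse_le[OF le]) (use t0 m in simp)
  also have "\<dots> = real m ^ m * inverse (t ^ m)"
    using m by (simp add: power_divide field_simps)
  also have "\<dots> \<le> real m ^ m * inverse (real n ^ 2)"
    by (rule mult_left_mono[OF le_imp_inverse_le[OF n2]]) (use n in auto)
  finally show ?thesis unfolding t_def .
qed

lemma exp_neg_powr_summable_nat: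
  fixes p :: real
  assumes p: "p > 0"
  shows "summable (\<lambda>n::nat. exp (- (real n powr p)))"
proof -
  obtain m :: nat where m: "m \<ge> 1" "real m * p \<ge> 2"
  proof
    let ?m = "nat \<lceil>2 / p\<rceil> + 1"
    show "?m \<ge> 1" by simp
    have "2 / p \<le> real ?m" by linarith
    then show "real ?m * p \<ge> 2" using p by (simp add: field_simps)
  qed
  have "summable (\<lambda>n. real m ^ m * inverse (real n ^ 2))"
    by (intro summable_mult inverse_power_summable) auto
  then show ?thesis
    by (rule summable_comparison_test'[where N=1])
       (use exp_neg_powr_bound[OF p m] in auto)
qed

definition rho :: "real \<Rightarrow> real \<Rightarrow> int \<Rightarrow> real" where
  "rho p \<eta> k = exp (- \<eta> * (real_of_int \<bar>k\<bar>) powr p)"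

lemma rho_nonneg: "rho p \<eta> k \<ge> 0" unfolding rho_def by simp

lemma rho_zero: "p > 0 \<Longrightarrow> rho p \<eta> 0 = 1" unfolding rho_def by simp

lemma rho1_summable:
  assumes p: "p > 0"
  shows "rho p 1 summable_on UNIV"
proof -
  have s: "(\<lambda>n::nat. exp (- (real n powr p))) summable_on UNIV"
    using exp_neg_powr_summable_nat[OF p] by (subst summable_on_UNIV_nonneg_real_iff) auto
  have inj1: "inj (\<lambda>n::nat. int n)" by (simp add: inj_on_def)
  have inj2: "inj (\<lambda>n::nat. - int n)" by (simp add: inj_on_def)
  have a: "rho p 1 summable_on (range (\<lambda>n::nat. int n))"
    by (subst summable_on_reindex[OF inj1]) (use s in \<open>simp add: o_def rho_def\<close>)
  have b: "rho p 1 summable_on (range (\<lambda>n::nat. - int n))"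
    by (subst summable_on_reindex[OF inj2]) (use s in \<open>simp add: o_def rho_def\<close>)
  have U: "(UNIV :: int set) = range (\<lambda>n::nat. int n) \<union> range (\<lambda>n::nat. - int n)"
  proof (safe)
    fix k :: int assume "k \<notin> range (\<lambda>n::nat. - int n)"
    then have "k \<ge> 0"
    proof (rule contrapos_np)
      assume "\<not> k \<ge> 0"
      then have "k = - int (nat (-k))" by simp
      then show "k \<in> range (\<lambda>n::nat. - int n)" by blast
    qed
    then show "k \<in> range int" by (auto simp: image_iff intro: exI[of _ "nat k"])
  qed auto
  show ?thesis unfolding U by (rule summable_on_union[OF a b])
qed

lemma rho_mono: assumes "\<eta> \<ge> 1" shows "rho p \<eta> k \<le> rho p 1 k"
proof -
  have "0 \<le> (\<eta> - 1) * (real_of_int \<bar>k\<bar>) powr p" using assms by simp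
  then have "(real_of_int \<bar>k\<bar>) powr p \<le> \<eta> * (real_of_int \<bar>k\<bar>) powr p" by (simp add: algebra_simps)
  then show ?thesis unfolding rho_def by simp
qed

lemma rho_summable:
  assumes p: "p > 0" and "\<eta> \<ge> 1"
  shows "rho p \<eta> summable_on UNIV"
  by (rule summable_on_comparison_test[OF rho1_summable[OF p]]) (use assms rho_mono rho_nonneg in auto)

lemma rho_shift_summable:
  assumes p: "p > 0" and "\<eta> \<ge> 1"
  shows "(\<lambda>k. rho p \<eta> (k - c)) summable_on UNIV"
proof -
  have inj: "inj (\<lambda>k::int. k - c)" by (simp add: inj_on_def)
  have "rho p \<eta> summable_on range (\<lambda>k::int. k - c)"
  proof -
    have "range (\<lambda>k::int. k - c) = UNIV"
      by (auto simp: image_iff intro: exI[of _ "_ + c"])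
    then show ?thesis using rho_summable[OF assms] by simp
  qed
  then show ?thesis
    by (subst (asm) summable_on_reindex[OF inj]) (simp add: o_def)
qed



locale gsetup =
  fixes d :: nat and p :: real and \<eta> :: real and \<beta> :: real and \<omega>0 :: "nat list \<Rightarrow> int"
  assumes d1: "d \<ge> 1" and p0: "p > 0" and eta1: "\<eta> \<ge> 1"
    and om0: "\<omega>0 \<in> config_space d"
    and hyp: "\<forall>\<omega> \<in> config_space d. finite {v. \<omega> v \<noteq> \<omega>0 v} \<longrightarrow>
        \<beta> * H_diff d p \<omega> \<omega>0 \<ge> \<eta> * (\<Sum>v\<in>{v. \<omega> v \<noteq> \<omega>0 v}. real_of_int \<bar>\<omega> v - \<omega>0 v\<bar> powr p)"
begin

abbreviation "w \<equiv> gibbs_weight d p \<beta> \<omega>0"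
abbreviation "Conf \<equiv> fv_configs d \<omega>0"

lemma w_pos: "w \<sigma> > 0" unfolding gibbs_weight_def by simp
lemma w_nn: "w \<sigma> \<ge> 0" using w_pos less_imp_le by blast

lemma om0_arb: "v \<notin> tree_V d \<Longrightarrow> \<omega>0 v = undefined"
  using om0 unfolding config_space_def by (rule PiE_arb)

lemma Conf_cs: "\<sigma> \<in> Conf R \<Longrightarrow> \<sigma> \<in> config_space d"
  unfolding fv_configs_def by auto

lemma Conf_out: "\<sigma> \<in> Conf R \<Longrightarrow> v \<notin> R \<Longrightarrow> \<sigma> v = \<omega>0 v"
  using om0_arb PiE_arb[of \<sigma> "tree_V d" "\<lambda>_. UNIV" v]
  unfolding fv_configs_def config_space_def by (cases "v \<in> tree_V d") auto

lemma Conf_dset: "\<sigma> \<in> Conf R \<Longrightarrow> dset \<omega>0 \<sigma> \<subseteq> R"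
  using Conf_out unfolding dset_def by blast

lemma om0_Conf: "\<omega>0 \<in> Conf R"
  using om0 unfolding fv_configs_def by auto

lemma Conf_mono: "R \<subseteq> R' \<Longrightarrow> Conf R \<subseteq> Conf R'"
  unfolding fv_configs_def by auto

lemma Conf_iff: "\<sigma> \<in> Conf R \<longleftrightarrow> \<sigma> \<in> config_space d \<and> (\<forall>v. v \<notin> R \<longrightarrow> \<sigma> v = \<omega>0 v)"
  using Conf_out unfolding fv_configs_def by auto

lemma mixc_cs: "f \<in> config_space d \<Longrightarrow> g \<in> config_space d \<Longrightarrow> mixc K f g \<in> config_space d"
  unfolding config_space_def mixc_def PiE_def extensional_def by auto

lemma mixc_Conf: "f \<in> Conf R \<Longrightarrow> g \<in> Conf R \<Longrightarrow> mixc K f g \<in> Conf R"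
  unfolding Conf_iff using mixc_cs by (auto simp: mixc_def)

lemma mixc_Conf2: "f \<in> Conf R \<Longrightarrow> mixc K f \<omega>0 \<in> Conf (R \<inter> K)"
  unfolding Conf_iff using mixc_cs om0 by (auto simp: mixc_def)

lemma mixc_Conf3: "f \<in> Conf R \<Longrightarrow> mixc K \<omega>0 f \<in> Conf (R - K)"
  unfolding Conf_iff using mixc_cs om0 by (auto simp: mixc_def)

lemma w_bound:
  assumes s: "\<sigma> \<in> Conf R" and fin: "finite R"
  shows "w \<sigma> \<le> (\<Prod>v\<in>R. rho p \<eta> (\<sigma> v - \<omega>0 v))"
proof -
  have D: "{v. \<sigma> v \<noteq> \<omega>0 v} \<subseteq> R" using Conf_dset[OF s] unfolding dset_def .
  then have finD: "finite {v. \<sigma> v \<noteq> \<omega>0 v}" using fin by (rule finite_subset)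
  have h: "\<beta> * H_diff d p \<sigma> \<omega>0 \<ge> \<eta> * (\<Sum>v\<in>{v. \<sigma> v \<noteq> \<omega>0 v}. real_of_int \<bar>\<sigma> v - \<omega>0 v\<bar> powr p)"
    using hyp Conf_cs[OF s] finD by blast
  have "(\<Sum>v\<in>{v. \<sigma> v \<noteq> \<omega>0 v}. real_of_int \<bar>\<sigma> v - \<omega>0 v\<bar> powr p)
      = (\<Sum>v\<in>R. real_of_int \<bar>\<sigma> v - \<omega>0 v\<bar> powr p)"
    by (rule sum.mono_neutral_left[OF fin D]) auto
  then have h2: "- \<beta> * H_diff d p \<sigma> \<omega>0 \<le> (\<Sum>v\<in>R. - \<eta> * real_of_int \<bar>\<sigma> v - \<omega>0 v\<bar> powr p)"
    using h by (simp add: sum_negf flip: sum_distrib_left)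
  have "w \<sigma> = exp (- \<beta> * H_diff d p \<sigma> \<omega>0)" unfolding gibbs_weight_def ..
  also have "\<dots> \<le> exp (\<Sum>v\<in>R. - \<eta> * real_of_int \<bar>\<sigma> v - \<omega>0 v\<bar> powr p)"
    using h2 by simp
  also have "\<dots> = (\<Prod>v\<in>R. rho p \<eta> (\<sigma> v - \<omega>0 v))"
    using fin by (simp add: exp_sum rho_def)
  finally show ?thesis .
qed

lemma Conf_bij:
  assumes "R \<subseteq> tree_V d"
  shows "bij_betw (\<lambda>\<sigma>. restrict \<sigma> R) (Conf R) (PiE R (\<lambda>_. UNIV))"
proof (rule bij_betw_byWitness[where f'="\<lambda>f v. if v \<in> R then f v else \<omega>0 v"])
  show "\<forall>a\<in>Conf R. (\<lambda>v. if v \<in> R then restrict a R v else \<omega>0 v) = a"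
    using Conf_out by (auto simp: fun_eq_iff)
  show "\<forall>a'\<in>PiE R (\<lambda>_. UNIV). restrict (\<lambda>v. if v \<in> R then a' v else \<omega>0 v) R = a'"
    by (auto simp: fun_eq_iff PiE_def extensional_def)
  show "(\<lambda>\<sigma>. restrict \<sigma> R) ` Conf R \<subseteq> PiE R (\<lambda>_. UNIV)" by auto
  show "(\<lambda>f v. if v \<in> R then f v else \<omega>0 v) ` PiE R (\<lambda>_. UNIV) \<subseteq> Conf R"
  proof
    fix \<sigma> assume "\<sigma> \<in> (\<lambda>f v. if v \<in> R then f v else \<omega>0 v) ` PiE R (\<lambda>_. UNIV)"
    then obtain f where f: "f \<in> PiE R (\<lambda>_. UNIV)" "\<sigma> = (\<lambda>v. if v \<in> R then f v else \<omega>0 v)" by auto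
    have "\<sigma> \<in> config_space d"
      using f assms om0_arb unfolding config_space_def PiE_def extensional_def by auto
    then show "\<sigma> \<in> Conf R" using f by (auto simp: Conf_iff)
  qed
qed

lemma w_summable:
  assumes R: "R \<subseteq> tree_V d" "finite R"
  shows "w summable_on Conf R"
proof -
  define g where "g f = (\<Prod>v\<in>R. rho p \<eta> (f v - \<omega>0 v))" for f :: "nat list \<Rightarrow> int"
  have "g summable_on PiE R (\<lambda>_. UNIV)"
    unfolding g_def
    by (rule PiE_prod_summable[where f="\<lambda>v k. rho p \<eta> (k - \<omega>0 v)"])
       (use R rho_nonneg rho_shift_summable[OF p0 eta1] in auto)
  then have "(\<lambda>\<sigma>. g (restrict \<sigma> R)) summable_on Conf R"
    using summable_on_reindex_bij_betw[OF Conf_bij[OF R(1)]] by blast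
  then show ?thesis
  proof (rule summable_on_comparison_test)
    fix \<sigma> assume s: "\<sigma> \<in> Conf R"
    have "g (restrict \<sigma> R) = (\<Prod>v\<in>R. rho p \<eta> (\<sigma> v - \<omega>0 v))"
      unfolding g_def by (rule prod.cong) auto
    then show "w \<sigma> \<le> g (restrict \<sigma> R)" using w_bound[OF s R(2)] by simp
    show "0 \<le> w \<sigma>" by (rule w_nn)
  qed
qed

lemma Z_ge1:
  assumes R: "R \<subseteq> tree_V d" "finite R"
  shows "infsum w (Conf R) \<ge> 1"
proof -
  have "sum w {\<omega>0} \<le> infsum w (Conf R)"
    by (rule finite_sum_le_infsum[OF w_summable[OF R]]) (use om0_Conf w_nn in auto)
  then show ?thesis using w_self[of d p \<beta> \<omega>0] by simp
qed

lemma w_summable_sub: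
  assumes R: "R \<subseteq> tree_V d" "finite R"
  shows "w summable_on (Conf R \<inter> X)"
  using w_summable[OF R] by (rule summable_on_subset_banach) auto

end



definition Gs :: "(nat list\<Rightarrow>int) \<Rightarrow> (nat list\<Rightarrow>int) \<times> (nat list\<Rightarrow>int) \<Rightarrow> nat list set" where
  "Gs \<omega>0 x = dset \<omega>0 (fst x) \<union> dset \<omega>0 (snd x)"

definition gadj :: "nat \<Rightarrow> nat list set \<Rightarrow> (nat list \<times> nat list) set" where
  "gadj d G = {(a,b). tree_adj d a b \<and> a \<in> G \<and> b \<in> G}"

definition Kset :: "nat \<Rightarrow> (nat list\<Rightarrow>int) \<Rightarrow> nat list set \<Rightarrow> (nat list\<Rightarrow>int) \<times> (nat list\<Rightarrow>int) \<Rightarrow> nat list set" where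
  "Kset d \<omega>0 U x = {v. \<exists>u\<in>U. u \<in> Gs \<omega>0 x \<and> (u,v) \<in> (gadj d (Gs \<omega>0 x))\<^sup>*}"

definition swp :: "nat \<Rightarrow> (nat list\<Rightarrow>int) \<Rightarrow> nat list set \<Rightarrow> (nat list\<Rightarrow>int) \<times> (nat list\<Rightarrow>int) \<Rightarrow> (nat list\<Rightarrow>int) \<times> (nat list\<Rightarrow>int)" where
  "swp d \<omega>0 U x = (mixc (Kset d \<omega>0 U x) (snd x) (fst x), mixc (Kset d \<omega>0 U x) (fst x) (snd x))"

lemma gadj_rtrancl_in: "(u,v) \<in> (gadj d G)\<^sup>* \<Longrightarrow> u \<in> G \<Longrightarrow> v \<in> G"
  by (induction rule: rtrancl_induct) (auto simp: gadj_def)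

lemma Kset_sub: "Kset d \<omega>0 U x \<subseteq> Gs \<omega>0 x"
  unfolding Kset_def using gadj_rtrancl_in by blast

lemma Kset_clos: "a \<in> Kset d \<omega>0 U x \<Longrightarrow> b \<in> Gs \<omega>0 x \<Longrightarrow> tree_adj d a b \<Longrightarrow> b \<in> Kset d \<omega>0 U x"
proof -
  assume a: "a \<in> Kset d \<omega>0 U x" and b: "b \<in> Gs \<omega>0 x" and ab: "tree_adj d a b"
  from a obtain u where u: "u \<in> U" "u \<in> Gs \<omega>0 x" "(u,a) \<in> (gadj d (Gs \<omega>0 x))\<^sup>*"
    unfolding Kset_def by blast
  have "a \<in> Gs \<omega>0 x" using a Kset_sub by blast
  then have "(a,b) \<in> gadj d (Gs \<omega>0 x)" using b ab by (simp add: gadj_def)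
  then have "(u,b) \<in> (gadj d (Gs \<omega>0 x))\<^sup>*" by (rule rtrancl_into_rtrancl[OF u(3)])
  then show ?thesis using u unfolding Kset_def by blast
qed

lemma Kset_U: "u \<in> U \<Longrightarrow> u \<in> Gs \<omega>0 x \<Longrightarrow> u \<in> Kset d \<omega>0 U x"
  unfolding Kset_def by blast

lemma Gs_swp: "Gs \<omega>0 (swp d \<omega>0 U x) = Gs \<omega>0 x"
  unfolding Gs_def swp_def dset_def mixc_def by auto

lemma Kset_swp: "Kset d \<omega>0 U (swp d \<omega>0 U x) = Kset d \<omega>0 U x"
  unfolding Kset_def Gs_swp ..

lemma swp_swp: "swp d \<omega>0 U (swp d \<omega>0 U x) = x"
proof -
  have "swp d \<omega>0 U (swp d \<omega>0 U x) = (mixc (Kset d \<omega>0 U x) (snd (swp d \<omega>0 U x)) (fst (swp d \<omega>0 U x)),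
         mixc (Kset d \<omega>0 U x) (fst (swp d \<omega>0 U x)) (snd (swp d \<omega>0 U x)))"
    unfolding swp_def[of d \<omega>0 U "swp d \<omega>0 U x"] Kset_swp ..
  also have "\<dots> = x" unfolding swp_def mixc_def by (cases x) (auto simp: fun_eq_iff)
  finally show ?thesis .
qed

lemma Fsets_local:
  assumes A: "A \<in> F_sets d W" and s: "\<sigma> \<in> config_space d" "\<sigma>' \<in> config_space d"
    and agree: "\<And>v. v \<in> W \<Longrightarrow> \<sigma> v = \<sigma>' v"
  shows "\<sigma> \<in> A \<longleftrightarrow> \<sigma>' \<in> A"
proof -
  obtain B where B: "A = {\<omega> \<in> config_space d. restrict \<omega> W \<in> B}"
    using A unfolding F_sets_def by blast
  have "restrict \<sigma> W = restrict \<sigma>' W" using agree by (auto simp: restrict_def)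
  then show ?thesis using s B by auto
qed

context gsetup
begin

lemma dset_finite: "\<sigma> \<in> Conf R \<Longrightarrow> finite R \<Longrightarrow> finite (dset \<omega>0 \<sigma>)"
  using Conf_dset finite_subset by blast

lemma w_split_G:
  assumes s: "\<sigma> \<in> Conf R" "finite R" and sub: "dset \<omega>0 \<sigma> \<subseteq> G"
    and clos: "\<And>a b. a \<in> K \<Longrightarrow> a \<in> G \<Longrightarrow> b \<in> G \<Longrightarrow> tree_adj d a b \<Longrightarrow> b \<in> K"
  shows "w \<sigma> = w (mixc K \<sigma> \<omega>0) * w (mixc K \<omega>0 \<sigma>)"
  by (rule w_split[OF dset_finite[OF s]]) (use sub clos in blast)

lemma ww_swp:
  assumes R: "finite R" and x: "fst x \<in> Conf R" "snd x \<in> Conf R"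
  shows "w (fst (swp d \<omega>0 U x)) * w (snd (swp d \<omega>0 U x)) = w (fst x) * w (snd x)"
proof -
  obtain \<sigma> \<tau> where xs: "x = (\<sigma>, \<tau>)" by force
  let ?K = "Kset d \<omega>0 U x" and ?G = "Gs \<omega>0 x"
  have clos: "\<And>a b. a \<in> ?K \<Longrightarrow> a \<in> ?G \<Longrightarrow> b \<in> ?G \<Longrightarrow> tree_adj d a b \<Longrightarrow> b \<in> ?K"
    using Kset_clos by blast
  have s: "\<sigma> \<in> Conf R" "\<tau> \<in> Conf R" using x xs by auto
  let ?s' = "mixc ?K \<tau> \<sigma>" and ?t' = "mixc ?K \<sigma> \<tau>"
  have s': "?s' \<in> Conf R" "?t' \<in> Conf R" using s mixc_Conf by auto
  have G1: "dset \<omega>0 \<sigma> \<subseteq> ?G" "dset \<omega>0 \<tau> \<subseteq> ?G" "dset \<omega>0 ?s' \<subseteq> ?G" "dset \<omega>0 ?t' \<subseteq> ?G"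
    unfolding Gs_def xs dset_def mixc_def by auto
  have e1: "w \<sigma> = w (mixc ?K \<sigma> \<omega>0) * w (mixc ?K \<omega>0 \<sigma>)"
    by (rule w_split_G[OF s(1) R G1(1) clos])
  have e2: "w \<tau> = w (mixc ?K \<tau> \<omega>0) * w (mixc ?K \<omega>0 \<tau>)"
    by (rule w_split_G[OF s(2) R G1(2) clos])
  have e3: "w ?s' = w (mixc ?K ?s' \<omega>0) * w (mixc ?K \<omega>0 ?s')"
    by (rule w_split_G[OF s'(1) R G1(3) clos])
  have e4: "w ?t' = w (mixc ?K ?t' \<omega>0) * w (mixc ?K \<omega>0 ?t')"
    by (rule w_split_G[OF s'(2) R G1(4) clos])
  have m: "mixc ?K ?s' \<omega>0 = mixc ?K \<tau> \<omega>0" "mixc ?K \<omega>0 ?s' = mixc ?K \<omega>0 \<sigma>"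
    "mixc ?K ?t' \<omega>0 = mixc ?K \<sigma> \<omega>0" "mixc ?K \<omega>0 ?t' = mixc ?K \<omega>0 \<tau>"
    unfolding mixc_def by (auto simp: fun_eq_iff)
  show ?thesis unfolding swp_def xs fst_conv snd_conv
    using e1 e2 e3 e4 m xs by simp
qed

definition ww :: "(nat list\<Rightarrow>int) \<times> (nat list\<Rightarrow>int) \<Rightarrow> real" where
  "ww x = w (fst x) * w (snd x)"

lemma ww_nn: "ww x \<ge> 0" unfolding ww_def using w_nn by simp

lemma ww_summable:
  assumes R: "R \<subseteq> tree_V d" "finite R"
  shows "ww summable_on (Conf R \<times> Conf R)"
proof -
  have "(\<lambda>(x,y). w x * w y) summable_on (Conf R \<times> Conf R)"
    by (rule pair_summable) (use w_summable[OF R] w_nn in auto)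
  then show ?thesis unfolding ww_def by (simp add: case_prod_beta')
qed

lemma ww_prod:
  assumes R: "R \<subseteq> tree_V d" "finite R"
  shows "infsum ww ((Conf R \<inter> X) \<times> (Conf R \<inter> Y)) = infsum w (Conf R \<inter> X) * infsum w (Conf R \<inter> Y)"
proof -
  have "infsum (\<lambda>(x,y). w x * w y) ((Conf R \<inter> X) \<times> (Conf R \<inter> Y)) = infsum w (Conf R \<inter> X) * infsum w (Conf R \<inter> Y)"
    by (rule pair_infsum) (use w_summable_sub[OF R] w_nn in auto)
  then show ?thesis unfolding ww_def by (simp add: case_prod_beta')
qed

lemma cov_switch:
  assumes R: "R \<subseteq> tree_V d" "finite R"
    and A: "A \<in> F_sets d W" and B: "B \<in> F_sets d U" and WU: "W \<inter> U = {}"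
  shows "\<bar>infsum w (Conf R \<inter> (A \<inter> B)) * infsum w (Conf R) - infsum w (Conf R \<inter> A) * infsum w (Conf R \<inter> B)\<bar>
     \<le> infsum ww {x \<in> Conf R \<times> Conf R. Kset d \<omega>0 U x \<inter> W \<noteq> {}}"
proof -
  let ?C = "Conf R"
  define S1 where "S1 = (?C \<inter> (A \<inter> B)) \<times> (?C \<inter> UNIV)"
  define S2 where "S2 = (?C \<inter> A) \<times> (?C \<inter> B)"
  define Good where "Good = {x. Kset d \<omega>0 U x \<inter> W = {}}"
  define Bad where "Bad = {x \<in> ?C \<times> ?C. Kset d \<omega>0 U x \<inter> W \<noteq> {}}"
  have smC: "ww summable_on (?C \<times> ?C)" by (rule ww_summable[OF R])
  have S1C: "S1 \<subseteq> ?C \<times> ?C" and S2C: "S2 \<subseteq> ?C \<times> ?C" unfolding S1_def S2_def by auto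
  have sm: "ww summable_on X" if "X \<subseteq> ?C \<times> ?C" for X
    using smC that by (rule summable_on_subset_banach)
  have e1: "infsum w (?C \<inter> (A \<inter> B)) * infsum w ?C = infsum ww S1"
    unfolding S1_def using ww_prod[OF R, of "A \<inter> B" UNIV] by simp
  have e2: "infsum w (?C \<inter> A) * infsum w (?C \<inter> B) = infsum ww S2"
    unfolding S2_def using ww_prod[OF R, of A B] by simp
  have split: "infsum ww S = infsum ww (S \<inter> Good) + infsum ww (S - Good)" if "S \<subseteq> ?C \<times> ?C" for S
  proof -
    have "S = (S \<inter> Good) \<union> (S - Good)" by auto
    then have "infsum ww S = infsum ww ((S \<inter> Good) \<union> (S - Good))" by simp
    also have "\<dots> = infsum ww (S \<inter> Good) + infsum ww (S - Good)"
    proof (rule infsum_Un_disjoint)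
      show "ww summable_on S \<inter> Good" using sm[of "S \<inter> Good"] that by blast
      show "ww summable_on S - Good" using sm[of "S - Good"] that by blast
    qed auto
    finally show ?thesis .
  qed
  have bij: "bij_betw (swp d \<omega>0 U) (S1 \<inter> Good) (S2 \<inter> Good)"
  proof (rule bij_betw_byWitness[where f'="swp d \<omega>0 U"])
    show "\<forall>a\<in>S1 \<inter> Good. swp d \<omega>0 U (swp d \<omega>0 U a) = a" using swp_swp by blast
    show "\<forall>a\<in>S2 \<inter> Good. swp d \<omega>0 U (swp d \<omega>0 U a) = a" using swp_swp by blast
    show "swp d \<omega>0 U ` (S1 \<inter> Good) \<subseteq> S2 \<inter> Good"
    proof
      fix y assume "y \<in> swp d \<omega>0 U ` (S1 \<inter> Good)"
      then obtain \<sigma> \<tau> where x: "(\<sigma>,\<tau>) \<in> S1 \<inter> Good" "y = swp d \<omega>0 U (\<sigma>,\<tau>)" by auto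
      let ?K = "Kset d \<omega>0 U (\<sigma>,\<tau>)"
      have s: "\<sigma> \<in> ?C" "\<tau> \<in> ?C" "\<sigma> \<in> A" "\<sigma> \<in> B" "?K \<inter> W = {}"
        using x unfolding S1_def Good_def by auto
      have cs: "\<sigma> \<in> config_space d" "\<tau> \<in> config_space d" using s Conf_cs by auto
      have U1: "\<tau> u = \<sigma> u" if "u \<in> U" "u \<notin> ?K" for u
      proof -
        have "u \<notin> Gs \<omega>0 (\<sigma>,\<tau>)" using that Kset_U by blast
        then show ?thesis unfolding Gs_def dset_def by auto
      qed
      have y1: "fst y \<in> ?C" "snd y \<in> ?C" using x(2) s mixc_Conf by (auto simp: swp_def)
      have "\<sigma> \<in> A \<longleftrightarrow> fst y \<in> A"
        by (rule Fsets_local[OF A cs(1) Conf_cs[OF y1(1)]]) (use s x(2) in \<open>auto simp: swp_def mixc_def disjoint_iff\<close>)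
      then have "fst y \<in> A" using s by simp
      moreover have "\<sigma> \<in> B \<longleftrightarrow> snd y \<in> B"
        by (rule Fsets_local[OF B cs(1) Conf_cs[OF y1(2)]]) (use s x(2) U1 in \<open>auto simp: swp_def mixc_def\<close>)
      then have "snd y \<in> B" using s by simp
      moreover have "y \<in> Good"
      proof -
        have "Kset d \<omega>0 U y = ?K" using x(2) Kset_swp by simp
        then show ?thesis using s unfolding Good_def by simp
      qed
      ultimately show "y \<in> S2 \<inter> Good" using y1 unfolding S2_def by (cases y) auto
    qed
    show "swp d \<omega>0 U ` (S2 \<inter> Good) \<subseteq> S1 \<inter> Good"
    proof
      fix y assume "y \<in> swp d \<omega>0 U ` (S2 \<inter> Good)"
      then obtain \<sigma> \<tau> where x: "(\<sigma>,\<tau>) \<in> S2 \<inter> Good" "y = swp d \<omega>0 U (\<sigma>,\<tau>)" by auto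
      let ?K = "Kset d \<omega>0 U (\<sigma>,\<tau>)"
      have s: "\<sigma> \<in> ?C" "\<tau> \<in> ?C" "\<sigma> \<in> A" "\<tau> \<in> B" "?K \<inter> W = {}"
        using x unfolding S2_def Good_def by auto
      have cs: "\<sigma> \<in> config_space d" "\<tau> \<in> config_space d" using s Conf_cs by auto
      have U1: "\<tau> u = \<sigma> u" if "u \<in> U" "u \<notin> ?K" for u
      proof -
        have "u \<notin> Gs \<omega>0 (\<sigma>,\<tau>)" using that Kset_U by blast
        then show ?thesis unfolding Gs_def dset_def by auto
      qed
      have y1: "fst y \<in> ?C" "snd y \<in> ?C" using x(2) s mixc_Conf by (auto simp: swp_def)
      have "\<sigma> \<in> A \<longleftrightarrow> fst y \<in> A"
        by (rule Fsets_local[OF A cs(1) Conf_cs[OF y1(1)]]) (use s x(2) in \<open>auto simp: swp_def mixc_def disjoint_iff\<close>)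
      then have "fst y \<in> A" using s by simp
      moreover have "\<tau> \<in> B \<longleftrightarrow> fst y \<in> B"
        by (rule Fsets_local[OF B cs(2) Conf_cs[OF y1(1)]]) (use s x(2) U1 in \<open>auto simp: swp_def mixc_def\<close>)
      then have "fst y \<in> B" using s by simp
      moreover have "y \<in> Good"
      proof -
        have "Kset d \<omega>0 U y = ?K" using x(2) Kset_swp by simp
        then show ?thesis using s unfolding Good_def by simp
      qed
      ultimately show "y \<in> S1 \<inter> Good" using y1 unfolding S1_def by (cases y) auto
    qed
  qed
  have eqG: "infsum ww (S1 \<inter> Good) = infsum ww (S2 \<inter> Good)"
  proof -
    have "infsum ww (S1 \<inter> Good) = infsum (\<lambda>x. ww (swp d \<omega>0 U x)) (S1 \<inter> Good)"
    proof (rule infsum_cong)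
      fix x assume "x \<in> S1 \<inter> Good"
      then have "fst x \<in> ?C" "snd x \<in> ?C" unfolding S1_def by auto
      then show "ww x = ww (swp d \<omega>0 U x)" unfolding ww_def using ww_swp[OF R(2)] by simp
    qed
    also have "\<dots> = infsum ww (S2 \<inter> Good)" by (rule infsum_reindex_bij_betw[OF bij])
    finally show ?thesis .
  qed
  have BadC: "Bad \<subseteq> ?C \<times> ?C" unfolding Bad_def by auto
  have b1: "0 \<le> infsum ww (S1 - Good)" "infsum ww (S1 - Good) \<le> infsum ww Bad"
  proof -
    show "0 \<le> infsum ww (S1 - Good)" by (rule infsum_nonneg) (rule ww_nn)
    show "infsum ww (S1 - Good) \<le> infsum ww Bad"
      by (rule infsum_le_subset[OF sm[OF BadC]]) (use S1C in \<open>auto simp: Bad_def Good_def ww_nn\<close>)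
  qed
  have b2: "0 \<le> infsum ww (S2 - Good)" "infsum ww (S2 - Good) \<le> infsum ww Bad"
  proof -
    show "0 \<le> infsum ww (S2 - Good)" by (rule infsum_nonneg) (rule ww_nn)
    show "infsum ww (S2 - Good) \<le> infsum ww Bad"
      by (rule infsum_le_subset[OF sm[OF BadC]]) (use S2C in \<open>auto simp: Bad_def Good_def ww_nn\<close>)
  qed
  show ?thesis
    unfolding e1 e2 split[OF S1C] split[OF S2C] eqG Bad_def[symmetric]
    using b1 b2 by linarith
qed

end



definition conn_from :: "nat \<Rightarrow> nat list \<Rightarrow> nat list set \<Rightarrow> bool" where
  "conn_from d w T \<longleftrightarrow> w \<in> T \<and> (\<forall>v\<in>T. (w,v) \<in> (gadj d T)\<^sup>*)"

definition Cw :: "nat \<Rightarrow> (nat list\<Rightarrow>int) \<Rightarrow> nat list \<Rightarrow> (nat list\<Rightarrow>int) \<times> (nat list\<Rightarrow>int) \<Rightarrow> nat list set" where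
  "Cw d \<omega>0 w x = {v. w \<in> Gs \<omega>0 x \<and> (w,v) \<in> (gadj d (Gs \<omega>0 x))\<^sup>*}"

lemma gadj_sym: "(a,b) \<in> gadj d G \<Longrightarrow> (b,a) \<in> gadj d G"
  unfolding gadj_def using tree_adj_sym by blast

lemma gadj_rtrancl_sym: "(a,b) \<in> (gadj d G)\<^sup>* \<Longrightarrow> (b,a) \<in> (gadj d G)\<^sup>*"
proof (induction rule: rtrancl_induct)
  case base then show ?case by simp
next
  case (step y z)
  then show ?case using gadj_sym by (blast intro: converse_rtrancl_into_rtrancl)
qed

lemma gadj_restrict:
  assumes "(w,v) \<in> (gadj d G)\<^sup>*"
  shows "(w,v) \<in> (gadj d {v. (w,v) \<in> (gadj d G)\<^sup>*})\<^sup>*"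
  using assms
proof (induction rule: rtrancl_induct)
  case base then show ?case by simp
next
  case (step y z)
  have "(w,z) \<in> (gadj d G)\<^sup>*" using step by (blast intro: rtrancl_into_rtrancl)
  then have "(y,z) \<in> gadj d {v. (w,v) \<in> (gadj d G)\<^sup>*}"
    using step unfolding gadj_def by auto
  then show ?case using step by (blast intro: rtrancl_into_rtrancl)
qed

lemma Cw_conn: "w \<in> Gs \<omega>0 x \<Longrightarrow> conn_from d w (Cw d \<omega>0 w x)"
  unfolding conn_from_def Cw_def using gadj_restrict by auto

lemma Cw_sub: "Cw d \<omega>0 w x \<subseteq> Gs \<omega>0 x"
  unfolding Cw_def using gadj_rtrancl_in by blast

lemma Cw_clos: "a \<in> Cw d \<omega>0 w x \<Longrightarrow> b \<in> Gs \<omega>0 x \<Longrightarrow> tree_adj d a b \<Longrightarrow> b \<in> Cw d \<omega>0 w x"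
proof -
  assume a: "a \<in> Cw d \<omega>0 w x" and b: "b \<in> Gs \<omega>0 x" and ab: "tree_adj d a b"
  have "a \<in> Gs \<omega>0 x" using a Cw_sub by blast
  then have "(a,b) \<in> gadj d (Gs \<omega>0 x)" using b ab by (simp add: gadj_def)
  then show ?thesis using a unfolding Cw_def by (blast intro: rtrancl_into_rtrancl)
qed

context gsetup
begin

definition eps2 :: real where
  "eps2 = infsum (\<lambda>(a,b). rho p \<eta> a * rho p \<eta> b) (UNIV - {(0,0)})"

lemma rr_summable: "(\<lambda>(a,b). rho p \<eta> a * rho p \<eta> b) summable_on (UNIV - {(0::int,0::int)})"
proof -
  have "(\<lambda>(a,b). rho p \<eta> a * rho p \<eta> b) summable_on (UNIV \<times> UNIV)"
    by (rule pair_summable) (use rho_summable[OF p0 eta1] rho_nonneg in auto)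
  then show ?thesis by (rule summable_on_subset_banach) auto
qed

lemma Gs_sub: "fst x \<in> Conf R \<Longrightarrow> snd x \<in> Conf R \<Longrightarrow> Gs \<omega>0 x \<subseteq> R"
  unfolding Gs_def using Conf_dset by blast

definition PT :: "nat list set \<Rightarrow> ((nat list\<Rightarrow>int) \<times> (nat list\<Rightarrow>int)) set" where
  "PT T = {x \<in> Conf T \<times> Conf T. \<forall>v\<in>T. fst x v \<noteq> \<omega>0 v \<or> snd x v \<noteq> \<omega>0 v}"

lemma PT_bound:
  assumes T: "T \<subseteq> tree_V d" "finite T"
  shows "ww summable_on PT T \<and> infsum ww (PT T) \<le> eps2 ^ card T"
proof -
  define N where "N = (UNIV - {(0::int,0::int)})"
  define f where "f = (\<lambda>(a,b). rho p \<eta> a * rho p \<eta> b)"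
  define g where "g h = (\<Prod>v\<in>T. f (h v))" for h :: "nat list \<Rightarrow> int \<times> int"
  define \<psi> where "\<psi> x = (\<lambda>v\<in>T. (fst x v - \<omega>0 v, snd x v - \<omega>0 v))" for x :: "(nat list\<Rightarrow>int) \<times> (nat list\<Rightarrow>int)"
  have fnn: "f z \<ge> 0" for z unfolding f_def using rho_nonneg by (auto simp: case_prod_beta)
  have fsm: "f summable_on N" unfolding f_def N_def by (rule rr_summable)
  have gsm: "g summable_on PiE T (\<lambda>_. N)"
    unfolding g_def by (rule PiE_prod_summable) (use T fnn fsm in auto)
  have gval: "infsum g (PiE T (\<lambda>_. N)) = eps2 ^ card T"
    unfolding g_def by (subst PiE_prod_infsum) (use T fnn fsm in \<open>auto simp: eps2_def f_def N_def\<close>)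
  have inj: "inj_on \<psi> (PT T)"
  proof (rule inj_onI)
    fix x y assume x: "x \<in> PT T" and y: "y \<in> PT T" and e: "\<psi> x = \<psi> y"
    have "fst x v = fst y v \<and> snd x v = snd y v" for v
    proof (cases "v \<in> T")
      case True
      then have "\<psi> x v = \<psi> y v" using e by simp
      then show ?thesis using True unfolding \<psi>_def by simp
    next
      case False
      have "fst x \<in> Conf T" "snd x \<in> Conf T" "fst y \<in> Conf T" "snd y \<in> Conf T"
        using x y unfolding PT_def by auto
      then show ?thesis using Conf_out[OF _ False] by metis
    qed
    then show "x = y" by (simp add: prod_eq_iff fun_eq_iff)
  qed
  have img: "\<psi> ` PT T \<subseteq> PiE T (\<lambda>_. N)"
    unfolding \<psi>_def PT_def N_def by auto
  have bnd: "ww x \<le> g (\<psi> x)" if x: "x \<in> PT T" for x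
  proof -
    have c: "fst x \<in> Conf T" "snd x \<in> Conf T" using x unfolding PT_def by auto
    have "ww x \<le> (\<Prod>v\<in>T. rho p \<eta> (fst x v - \<omega>0 v)) * (\<Prod>v\<in>T. rho p \<eta> (snd x v - \<omega>0 v))"
      unfolding ww_def by (rule mult_mono) (use w_bound[OF c(1) T(2)] w_bound[OF c(2) T(2)] w_nn in \<open>auto intro: prod_nonneg rho_nonneg\<close>)
    also have "\<dots> = g (\<psi> x)"
      unfolding g_def f_def \<psi>_def by (simp add: prod.distrib[symmetric])
    finally show ?thesis .
  qed
  have gsm2: "g summable_on \<psi> ` PT T" using gsm img by (rule summable_on_subset_banach)
  then have gpsm: "(g \<circ> \<psi>) summable_on PT T" using summable_on_reindex[OF inj] by blast
  have wwsm: "ww summable_on PT T"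
    by (rule summable_on_comparison_test[OF gpsm]) (use bnd ww_nn in auto)
  have "infsum ww (PT T) \<le> infsum (g \<circ> \<psi>) (PT T)"
    by (rule infsum_mono[OF wwsm gpsm]) (use bnd in auto)
  also have "\<dots> = infsum g (\<psi> ` PT T)" using infsum_reindex[OF inj] by metis
  also have "\<dots> \<le> infsum g (PiE T (\<lambda>_. N))"
    by (rule infsum_le_subset[OF gsm img]) (auto simp: g_def intro!: prod_nonneg fnn)
  finally show ?thesis using wwsm gval by simp
qed

lemma peierls:
  assumes L: "\<Lambda> \<subseteq> tree_V d" "finite \<Lambda>" and T: "T \<subseteq> \<Lambda>"
  shows "infsum ww {x \<in> Conf \<Lambda> \<times> Conf \<Lambda>. Cw d \<omega>0 wv x = T} \<le> eps2 ^ card T * (infsum w (Conf \<Lambda>))\<^sup>2"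
proof -
  let ?C = "Conf \<Lambda>"
  define Q where "Q = {x \<in> ?C \<times> ?C. Cw d \<omega>0 wv x = T}"
  have TV: "T \<subseteq> tree_V d" "finite T" using L T by (auto intro: finite_subset)
  define \<Phi> where "\<Phi> x = ((mixc T (fst x) \<omega>0, mixc T (snd x) \<omega>0), (mixc T \<omega>0 (fst x), mixc T \<omega>0 (snd x)))"
    for x :: "(nat list\<Rightarrow>int) \<times> (nat list\<Rightarrow>int)"
  define F where "F z = ww (fst z) * ww (snd z)" for z :: "((nat list\<Rightarrow>int) \<times> (nat list\<Rightarrow>int)) \<times> ((nat list\<Rightarrow>int) \<times> (nat list\<Rightarrow>int))"
  have inj: "inj_on \<Phi> Q"
  proof (rule inj_onI)
    fix x y assume "\<Phi> x = \<Phi> y"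
    then have e1: "mixc T (fst x) \<omega>0 = mixc T (fst y) \<omega>0" "mixc T (snd x) \<omega>0 = mixc T (snd y) \<omega>0"
       "mixc T \<omega>0 (fst x) = mixc T \<omega>0 (fst y)" "mixc T \<omega>0 (snd x) = mixc T \<omega>0 (snd y)"
      unfolding \<Phi>_def by auto
    have "fst x v = fst y v \<and> snd x v = snd y v" for v
      using fun_cong[OF e1(1), of v] fun_cong[OF e1(2), of v] fun_cong[OF e1(3), of v] fun_cong[OF e1(4), of v]
      unfolding mixc_def by (cases "v \<in> T") auto
    then show "x = y" by (simp add: prod_eq_iff fun_eq_iff)
  qed
  have img: "\<Phi> ` Q \<subseteq> PT T \<times> (?C \<times> ?C)"
  proof
    fix z assume "z \<in> \<Phi> ` Q"
    then obtain x where x: "x \<in> Q" "z = \<Phi> x" by auto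
    have c: "fst x \<in> ?C" "snd x \<in> ?C" and CT: "Cw d \<omega>0 wv x = T" using x unfolding Q_def by auto
    have "mixc T (fst x) \<omega>0 \<in> Conf T" "mixc T (snd x) \<omega>0 \<in> Conf T"
      using mixc_Conf2[OF c(1), of T] mixc_Conf2[OF c(2), of T] Conf_mono[of "\<Lambda> \<inter> T" T] by auto
    moreover have "\<forall>v\<in>T. mixc T (fst x) \<omega>0 v \<noteq> \<omega>0 v \<or> mixc T (snd x) \<omega>0 v \<noteq> \<omega>0 v"
      using Cw_sub[of d \<omega>0 wv x] CT unfolding Gs_def dset_def mixc_def by auto
    moreover have "mixc T \<omega>0 (fst x) \<in> ?C" "mixc T \<omega>0 (snd x) \<in> ?C"
      using mixc_Conf3[OF c(1), of T] mixc_Conf3[OF c(2), of T] Conf_mono[of "\<Lambda> - T" \<Lambda>] by auto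
    ultimately show "z \<in> PT T \<times> (?C \<times> ?C)" using x(2) unfolding \<Phi>_def PT_def by auto
  qed
  have eqF: "ww x = F (\<Phi> x)" if x: "x \<in> Q" for x
  proof -
    have c: "fst x \<in> ?C" "snd x \<in> ?C" and CT: "Cw d \<omega>0 wv x = T" using x unfolding Q_def by auto
    have clos: "\<And>a b. a \<in> T \<Longrightarrow> a \<in> Gs \<omega>0 x \<Longrightarrow> b \<in> Gs \<omega>0 x \<Longrightarrow> tree_adj d a b \<Longrightarrow> b \<in> T"
      using Cw_clos CT by blast
    have G: "dset \<omega>0 (fst x) \<subseteq> Gs \<omega>0 x" "dset \<omega>0 (snd x) \<subseteq> Gs \<omega>0 x" unfolding Gs_def by auto
    have "w (fst x) = w (mixc T (fst x) \<omega>0) * w (mixc T \<omega>0 (fst x))"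
      by (rule w_split_G[OF c(1) L(2) G(1) clos])
    moreover have "w (snd x) = w (mixc T (snd x) \<omega>0) * w (mixc T \<omega>0 (snd x))"
      by (rule w_split_G[OF c(2) L(2) G(2) clos])
    ultimately show ?thesis unfolding F_def ww_def \<Phi>_def by simp
  qed
  have PTsm: "ww summable_on PT T" using PT_bound[OF TV] by blast
  have Csm: "ww summable_on ?C \<times> ?C" by (rule ww_summable[OF L])
  have Fsm: "F summable_on PT T \<times> (?C \<times> ?C)"
    using pair_summable[OF PTsm _ Csm] ww_nn unfolding F_def by (simp add: case_prod_beta')
  have Fval: "infsum F (PT T \<times> (?C \<times> ?C)) = infsum ww (PT T) * infsum ww (?C \<times> ?C)"
    using pair_infsum[OF PTsm _ Csm] ww_nn unfolding F_def by (simp add: case_prod_beta')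
  have "infsum ww Q = infsum (F \<circ> \<Phi>) Q"
    by (rule infsum_cong) (use eqF in simp)
  also have "\<dots> = infsum F (\<Phi> ` Q)" using infsum_reindex[OF inj] by metis
  also have "\<dots> \<le> infsum F (PT T \<times> (?C \<times> ?C))"
    by (rule infsum_le_subset[OF Fsm img]) (auto simp: F_def intro: mult_nonneg_nonneg ww_nn)
  also have "\<dots> = infsum ww (PT T) * (infsum w ?C)\<^sup>2"
    unfolding Fval using ww_prod[OF L, of UNIV UNIV] by (simp add: power2_eq_square)
  also have "\<dots> \<le> eps2 ^ card T * (infsum w ?C)\<^sup>2"
    by (rule mult_right_mono) (use PT_bound[OF TV] in auto)
  finally show ?thesis unfolding Q_def .
qed

end



lemma ball_sub: "ball d n \<subseteq> tree_V d" unfolding ball_def by auto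

lemma ball_finite: "finite (ball d n)"
proof (rule finite_subset[OF _ finite_lists_length_le[of "{..d}" n]])
  show "ball d n \<subseteq> {xs. set xs \<subseteq> {..d} \<and> length xs \<le> n}"
  proof
    fix xs assume "xs \<in> ball d n"
    then have V: "xs \<in> tree_V d" "length xs \<le> n" unfolding ball_def by auto
    have "set xs \<subseteq> {..d}"
    proof (cases xs)
      case Nil then show ?thesis by simp
    next
      case (Cons a t) then show ?thesis using V(1) unfolding tree_V_def by auto
    qed
    then show "xs \<in> {xs. set xs \<subseteq> {..d} \<and> length xs \<le> n}" using V by simp
  qed
qed simp

definition Cl :: "nat \<Rightarrow> nat \<Rightarrow> nat list \<Rightarrow> nat list set set" where
  "Cl d n r = {T. T \<subseteq> ball d n \<and> r \<in> T \<and> (\<forall>v\<in>T. \<exists>z. v = r @ z) \<and> (\<forall>v\<in>T. v \<noteq> r \<longrightarrow> butlast v \<in> T)}"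

lemma Cl_finite: "finite (Cl d n r)"
  by (rule finite_subset[of _ "Pow (ball d n)"]) (auto simp: Cl_def ball_finite)

lemma Cl_chain:
  assumes T: "T \<in> Cl d n r" and v: "v \<in> T" and k: "length r \<le> k" "k \<le> length v"
  shows "take k v \<in> T"
  using v k
proof (induction "length v - k" arbitrary: v)
  case 0
  then show ?case by simp
next
  case (Suc m)
  have ne: "v \<noteq> r" using Suc by auto
  then have bv: "butlast v \<in> T" using T Suc.prems unfolding Cl_def by auto
  have "take k (butlast v) \<in> T"
    by (rule Suc.hyps) (use Suc bv in auto)
  moreover have "take k (butlast v) = take k v"
  proof -
    have "k \<le> length v - 1" using Suc.hyps(2) by arith
    then show ?thesis by (simp add: butlast_conv_take min_def)
  qed
  ultimately show ?case by simp
qed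

definition ch :: "nat \<Rightarrow> nat \<Rightarrow> nat list \<Rightarrow> nat list set" where
  "ch d n r = {c \<in> ball d n. \<exists>i. c = r @ [i]}"

lemma ch_card: "card (ch d n r) \<le> d + 1"
proof -
  have "ch d n r \<subseteq> (\<lambda>i. r @ [i]) ` {..d}"
    unfolding ch_def using ball_sub snoc_in_V by blast
  then have "card (ch d n r) \<le> card ((\<lambda>i. r @ [i]) ` {..d})" by (rule card_mono[rotated]) simp
  also have "\<dots> \<le> card {..d}" by (rule card_image_le) simp
  finally show ?thesis by simp
qed

lemma ch_finite: "finite (ch d n r)"
  by (rule finite_subset[OF _ ball_finite[of d n]]) (auto simp: ch_def)

definition fT :: "nat \<Rightarrow> nat \<Rightarrow> nat list \<Rightarrow> nat list set \<Rightarrow> nat list \<Rightarrow> nat list set" where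
  "fT d n r T = (\<lambda>c\<in>ch d n r. {v\<in>T. \<exists>z. v = c @ z})"

lemma fT_in:
  assumes T: "T \<in> Cl d n r" and c: "c \<in> ch d n r"
  shows "fT d n r T c \<in> insert {} (Cl d n c)"
proof (cases "fT d n r T c = {}")
  case True then show ?thesis by simp
next
  case False
  then obtain v z where v: "v \<in> T" "v = c @ z" using c unfolding fT_def by auto
  obtain i where ci: "c = r @ [i]" using c unfolding ch_def by auto
  have "take (length c) v \<in> T" by (rule Cl_chain[OF T v(1)]) (use ci v in auto)
  then have cT: "c \<in> T" using v by simp
  have "fT d n r T c \<in> Cl d n c"
    unfolding Cl_def
  proof (intro CollectI conjI ballI impI)
    show "fT d n r T c \<subseteq> ball d n" using T c unfolding fT_def Cl_def by auto
    show "c \<in> fT d n r T c" using cT c unfolding fT_def by auto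
    show "\<exists>z. u = c @ z" if "u \<in> fT d n r T c" for u using that c unfolding fT_def by auto
    fix u assume u: "u \<in> fT d n r T c" "u \<noteq> c"
    then obtain z where z: "u \<in> T" "u = c @ z" "z \<noteq> []" using c unfolding fT_def by auto
    have "u \<noteq> r" using z ci by auto
    then have "butlast u \<in> T" using T z unfolding Cl_def by auto
    moreover have "butlast u = c @ butlast z" using z by (simp add: butlast_append)
    ultimately show "butlast u \<in> fT d n r T c" using c unfolding fT_def by auto
  qed
  then show ?thesis by simp
qed

lemma fT_union:
  assumes T: "T \<in> Cl d n r"
  shows "T = insert r (\<Union>c\<in>ch d n r. fT d n r T c)"
proof
  show "insert r (\<Union>c\<in>ch d n r. fT d n r T c) \<subseteq> T"
    using T unfolding Cl_def fT_def by auto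
  show "T \<subseteq> insert r (\<Union>c\<in>ch d n r. fT d n r T c)"
  proof
    fix v assume v: "v \<in> T"
    show "v \<in> insert r (\<Union>c\<in>ch d n r. fT d n r T c)"
    proof (cases "v = r")
      case True then show ?thesis by simp
    next
      case False
      obtain z where z: "v = r @ z" using T v unfolding Cl_def by auto
      with False have zne: "z \<noteq> []" by auto
      let ?c = "take (Suc (length r)) v"
      have lz: "Suc (length r) \<le> length v" using z zne by (simp add: Suc_le_eq)
      have cT: "?c \<in> T" by (rule Cl_chain[OF T v]) (use lz in auto)
      have c: "?c = r @ [hd z]" using z zne by (cases z) auto
      have "?c \<in> ch d n r" using cT c T unfolding ch_def Cl_def by auto
      moreover have "v \<in> fT d n r T ?c"
        using v calculation unfolding fT_def by (auto intro: exI[of _ "drop (Suc (length r)) v"])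
      ultimately show ?thesis by blast
    qed
  qed
qed

lemma fT_disj:
  assumes c: "c \<in> ch d n r" "c' \<in> ch d n r" "c \<noteq> c'"
  shows "fT d n r T c \<inter> fT d n r T c' = {}"
proof -
  obtain i i' where ci: "c = r @ [i]" "c' = r @ [i']" using c unfolding ch_def by auto
  show ?thesis using c ci unfolding fT_def by auto
qed

lemma r_notin_fT: "c \<in> ch d n r \<Longrightarrow> r \<notin> fT d n r T c"
  unfolding fT_def ch_def by auto

lemma card_T_fT:
  assumes T: "T \<in> Cl d n r"
  shows "card T = 1 + (\<Sum>c\<in>ch d n r. card (fT d n r T c))"
proof -
  have finT: "finite T" using T ball_finite unfolding Cl_def by (blast intro: finite_subset)
  have fin: "finite (fT d n r T c)" if "c \<in> ch d n r" for c
    using finT unfolding fT_def using that by auto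
  have "card T = card (insert r (\<Union>c\<in>ch d n r. fT d n r T c))" using fT_union[OF T] by simp
  also have "\<dots> = 1 + card (\<Union>c\<in>ch d n r. fT d n r T c)"
    using r_notin_fT fin ch_finite by (subst card_insert_disjoint) auto
  also have "card (\<Union>c\<in>ch d n r. fT d n r T c) = (\<Sum>c\<in>ch d n r. card (fT d n r T c))"
    by (rule card_UN_disjoint) (use ch_finite fin fT_disj in auto)
  finally show ?thesis .
qed

lemma Cl_sum_le1:
  fixes x :: real
  assumes x: "0 \<le> x" "x \<le> (1/2) ^ (d+1)"
  shows "(\<Sum>T\<in>Cl d n r. x ^ card T) \<le> 1"
proof (induction "n - length r" arbitrary: r rule: less_induct)
  case less
  let ?ch = "ch d n r"
  let ?P = "PiE ?ch (\<lambda>c. insert {} (Cl d n c))"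
  have IH: "(\<Sum>T\<in>Cl d n c. x ^ card T) \<le> 1" if cc: "c \<in> ?ch" for c
  proof (rule less)
    obtain i where "c = r @ [i]" using cc unfolding ch_def by auto
    moreover have "length c \<le> n" using cc unfolding ch_def ball_def by auto
    ultimately show "n - length c < n - length r" by auto
  qed
  have inj: "inj_on (fT d n r) (Cl d n r)"
  proof (rule inj_onI)
    fix T T' assume "T \<in> Cl d n r" "T' \<in> Cl d n r" "fT d n r T = fT d n r T'"
    then show "T = T'" using fT_union by metis
  qed
  have img: "fT d n r ` Cl d n r \<subseteq> ?P"
  proof
    fix g assume "g \<in> fT d n r ` Cl d n r"
    then obtain T where T: "T \<in> Cl d n r" "g = fT d n r T" by auto
    show "g \<in> ?P" using fT_in[OF T(1)] T(2) unfolding fT_def PiE_def extensional_def by auto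
  qed
  have finP: "finite ?P" using ch_finite Cl_finite by (auto intro: finite_PiE)
  have hnn: "0 \<le> x * (\<Prod>c\<in>?ch. x ^ card (g c))" for g using x by (intro mult_nonneg_nonneg prod_nonneg) auto
  have "(\<Sum>T\<in>Cl d n r. x ^ card T) = (\<Sum>T\<in>Cl d n r. x * (\<Prod>c\<in>?ch. x ^ card (fT d n r T c)))"
    by (rule sum.cong[OF refl]) (simp add: card_T_fT power_sum)
  also have "\<dots> = (\<Sum>g\<in>fT d n r ` Cl d n r. x * (\<Prod>c\<in>?ch. x ^ card (g c)))"
    by (rule sum.reindex[OF inj, symmetric, simplified o_def])
  also have "\<dots> \<le> (\<Sum>g\<in>?P. x * (\<Prod>c\<in>?ch. x ^ card (g c)))"
    by (rule sum_mono2[OF finP img]) (rule hnn)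
  also have "\<dots> = x * (\<Prod>c\<in>?ch. \<Sum>S\<in>insert {} (Cl d n c). x ^ card S)"
    by (simp add: sum_distrib_left[symmetric] prod_sum_PiE[OF ch_finite, where B="\<lambda>c. insert {} (Cl d n c)"] Cl_finite)
  also have "\<dots> \<le> x * (\<Prod>c\<in>?ch. 2)"
  proof (rule mult_left_mono[OF prod_mono])
    fix c assume c: "c \<in> ?ch"
    have nn: "0 \<le> (\<Sum>S\<in>Cl d n c. x ^ card S)" using x by (auto intro: sum_nonneg)
    have "(\<Sum>S\<in>insert {} (Cl d n c). x ^ card S) \<le> 1 + (\<Sum>S\<in>Cl d n c. x ^ card S)"
      using nn by (simp add: sum.insert_if Cl_finite)
    then show "0 \<le> (\<Sum>S\<in>insert {} (Cl d n c). x ^ card S) \<and> (\<Sum>S\<in>insert {} (Cl d n c). x ^ card S) \<le> 2"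
      using IH[OF c] x by (auto intro: sum_nonneg)
  qed (use x in simp)
  also have "\<dots> = x * 2 ^ card ?ch" by simp
  also have "\<dots> \<le> (1/2)^(d+1) * 2 ^ (d+1)"
  proof (rule mult_mono)
    show "(2::real) ^ card ?ch \<le> 2 ^ (d+1)" by (rule power_increasing) (use ch_card in auto)
  qed (use x in auto)
  also have "\<dots> = 1" by (simp add: power_mult_distrib[symmetric])
  finally show ?case .
qed



lemma snoc_split:
  assumes "v @ z = c @ [i]" "\<not> (\<exists>z'. c = v @ z')"
  shows "v = c @ [i]"
proof (cases z rule: rev_cases)
  case Nil then show ?thesis using assms by simp
next
  case (snoc ys y)
  then have "c = v @ ys" using assms(1) by simp
  then show ?thesis using assms(2) by blast
qed

lemma walk_exit:
  assumes "(a,b) \<in> (gadj d T)\<^sup>*" "\<exists>z. a = v @ z" "\<not> (\<exists>z. b = v @ z)"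
  shows "butlast v \<in> T"
  using assms
proof (induction rule: rtrancl_induct)
  case base then show ?case by simp
next
  case (step y c)
  show ?case
  proof (cases "\<exists>z. y = v @ z")
    case False then show ?thesis using step by blast
  next
    case True
    then obtain z where z: "y = v @ z" by blast
    have adj: "tree_adj d y c" "c \<in> T" using step(2) unfolding gadj_def by auto
    then obtain i where "c = y @ [i] \<or> y = c @ [i]" unfolding tree_adj_def by blast
    then show ?thesis
    proof
      assume "c = y @ [i]" then show ?thesis using z step(5) by auto
    next
      assume "y = c @ [i]"
      then have "v = c @ [i]" using snoc_split[of v z c i] z step(5) by simp
      then show ?thesis using adj by simp
    qed
  qed
qed

lemma top_exists:
  assumes fin: "finite T" and sub: "T \<subseteq> ball d n" and conn: "conn_from d w T"
  shows "\<exists>r. T \<in> Cl d n r \<and> (\<exists>z. w = r @ z)"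
proof -
  have wT: "w \<in> T" and reach: "\<And>v. v \<in> T \<Longrightarrow> (w,v) \<in> (gadj d T)\<^sup>*"
    using conn unfolding conn_from_def by auto
  define m where "m = Min (length ` T)"
  have "m \<in> length ` T" unfolding m_def using fin wT by (intro Min_in) auto
  then obtain r where r: "r \<in> T" "length r = m" by auto
  have rmin: "length r \<le> length v" if "v \<in> T" for v
    using that fin r unfolding m_def by (auto intro: Min_le)
  have par: "butlast v \<in> T" if v: "v \<in> T" "v \<noteq> r" for v
  proof -
    have "(v,w) \<in> (gadj d T)\<^sup>*" using reach[OF v(1)] by (rule gadj_rtrancl_sym)
    then have vr: "(v,r) \<in> (gadj d T)\<^sup>*" using reach[OF r(1)] by (rule rtrancl_trans)
    have nr: "\<not> (\<exists>z. r = v @ z)"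
    proof
      assume "\<exists>z. r = v @ z"
      then obtain z where "r = v @ z" by blast
      then show False using rmin[OF v(1)] v(2) by auto
    qed
    show ?thesis by (rule walk_exit[OF vr _ nr]) (rule exI[of _ "[]"], simp)
  qed
  have desc: "\<exists>z. v = r @ z" if "v \<in> T" for v
    using that
  proof (induction "length v" arbitrary: v rule: less_induct)
    case less
    show ?case
    proof (cases "v = r")
      case True then show ?thesis by simp
    next
      case False
      have "v \<noteq> []" using rmin[OF less.prems] False by (cases v) auto
      have bT: "butlast v \<in> T" by (rule par[OF less.prems False])
      have "length (butlast v) < length v" using \<open>v \<noteq> []\<close> by simp
      then obtain z where "butlast v = r @ z" using less.hyps bT by blast
      then have "v = r @ (z @ [last v])" using \<open>v \<noteq> []\<close> by (metis append_assoc append_butlast_last_id)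
      then show ?thesis by blast
    qed
  qed
  have "T \<in> Cl d n r" unfolding Cl_def using sub r(1) desc par by auto
  then show ?thesis using desc[OF wT] by blast
qed

lemma card_ge_height:
  assumes T: "T \<in> Cl d n r" and w: "w \<in> T"
  shows "length w - length r + 1 \<le> card T"
proof -
  have finT: "finite T" using T ball_finite unfolding Cl_def by (blast intro: finite_subset)
  have lr: "length r \<le> length w" using T w unfolding Cl_def by auto
  have sub: "(\<lambda>j. take j w) ` {length r..length w} \<subseteq> T"
    using Cl_chain[OF T w] by auto
  have inj: "inj_on (\<lambda>j. take j w) {length r..length w}"
  proof (rule inj_onI)
    fix i j assume "i \<in> {length r..length w}" "j \<in> {length r..length w}" "take i w = take j w"
    then show "i = j" by (metis atLeastAtMost_iff length_take min.absorb2)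
  qed
  have "card {length r..length w} \<le> card T" by (rule card_inj_on_le[OF inj sub finT])
  then show ?thesis using lr by simp
qed

lemma relpow_mono': "(R :: ('a \<times> 'a) set) \<subseteq> S \<Longrightarrow> R ^^ n \<subseteq> S ^^ n"
  by (induction n) (simp_all add: relcomp_mono)

lemma card_gadj:
  assumes fin: "finite T"
  shows "card (gadj d T) \<le> 2 * card T"
proof -
  define \<iota> where "\<iota> e = (if length (fst e) < length (snd e) then (snd e, True) else (fst e, False))"
    for e :: "nat list \<times> nat list"
  define \<rho> where "\<rho> x = (if snd x then (butlast (fst x), fst x) else (fst x, butlast (fst x)))"
    for x :: "nat list \<times> bool"
  have inv: "\<rho> (\<iota> e) = e" if e: "e \<in> gadj d T" for e
  proof -
    obtain a b where ab: "e = (a,b)" by force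
    obtain i where "b = a @ [i] \<or> a = b @ [i]" using e ab unfolding gadj_def tree_adj_def by auto
    then show ?thesis unfolding ab \<iota>_def \<rho>_def by auto
  qed
  have inj: "inj_on \<iota> (gadj d T)" by (rule inj_on_inverseI[of _ \<rho>]) (rule inv)
  have img: "\<iota> ` gadj d T \<subseteq> T \<times> (UNIV :: bool set)"
    unfolding \<iota>_def gadj_def by auto
  have "card (gadj d T) \<le> card (T \<times> (UNIV :: bool set))"
    by (rule card_inj_on_le[OF inj img]) (use fin in simp)
  also have "\<dots> = 2 * card T" by (simp add: card_cartesian_product)
  finally show ?thesis .
qed

lemma gdist_le:
  assumes fin: "finite T" and conn: "conn_from d w T" and u: "u \<in> T"
  shows "gdist d w u \<le> 2 * card T"
proof -
  have wu: "(w,u) \<in> (gadj d T)\<^sup>*" using conn u unfolding conn_from_def by auto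
  have finE: "finite (gadj d T)"
    by (rule finite_subset[of _ "T \<times> T"]) (use fin in \<open>auto simp: gadj_def\<close>)
  obtain k where k: "k \<le> card (gadj d T)" "(w,u) \<in> (gadj d T) ^^ k"
    using wu rtrancl_finite_eq_relpow[OF finE] by auto
  have "(w,u) \<in> {(a, b). tree_adj d a b} ^^ k"
    using k(2) relpow_mono'[of "gadj d T" "{(a, b). tree_adj d a b}" k] unfolding gadj_def by auto
  then have "gdist d w u \<le> k" unfolding gdist_def by (rule Least_le)
  then show ?thesis using k(1) card_gadj[OF fin, of d] by linarith
qed

lemma set_dist_le:
  assumes "finite W" "finite U" "w \<in> W" "u \<in> U"
  shows "set_dist d W U \<le> gdist d w u"
  unfolding set_dist_def
  by (rule Min_le) (use assms in \<open>auto intro: finite_image_set2\<close>)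

lemma geom_half: "(\<Sum>j\<le>m. (1/2::real)^j) = 2 - (1/2)^m"
  by (induction m) auto

lemma tsum_bound:
  fixes e :: real
  assumes e: "0 \<le> e" "e \<le> (1/2) ^ (d+4)"
    and TT: "\<And>T. T \<in> \<T> \<Longrightarrow> T \<subseteq> ball d n \<and> conn_from d w T \<and> L \<le> 2 * card T"
  shows "(\<Sum>T\<in>\<T>. e ^ card T) \<le> 2 * (1/2) ^ L"
proof -
  define x :: real where "x = (1/2) ^ (d+1)"
  define Cj where "Cj j = Cl d n (take (length w - j) w)" for j
  define h where "h j T = (if T \<in> Cj j then x ^ card T * (1/2) ^ (j + L) else 0)" for j T
  have x0: "0 \<le> x" unfolding x_def by simp
  have hnn: "0 \<le> h j T" for j T unfolding h_def using x0 by simp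
  have finTT: "finite \<T>"
    by (rule finite_subset[of _ "Pow (ball d n)"]) (use TT ball_finite in auto)
  have ex: "e ^ card T \<le> (\<Sum>j\<le>length w. h j T)" if T: "T \<in> \<T>" for T
  proof -
    have T1: "T \<subseteq> ball d n" "conn_from d w T" "L \<le> 2 * card T" using TT[OF T] by auto
    have finT: "finite T" using T1(1) ball_finite by (rule finite_subset)
    obtain r z where r: "T \<in> Cl d n r" "w = r @ z" using top_exists[OF finT T1(1,2)] by blast
    define j where "j = length w - length r"
    have jle: "j \<le> length w" unfolding j_def by simp
    have rw: "take (length w - j) w = r" unfolding j_def using r(2) by simp
    have TC: "T \<in> Cj j" unfolding Cj_def rw by (rule r(1))
    have wT: "w \<in> T" using T1(2) unfolding conn_from_def by auto
    have cT: "j + 1 \<le> card T" using card_ge_height[OF r(1) wT] unfolding j_def .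
    have "e ^ card T \<le> ((1/2) ^ (d+4)) ^ card T" by (rule power_mono) (use e in auto)
    also have "\<dots> = x ^ card T * (1/2) ^ (3 * card T)"
    proof -
      have "((1/2::real) ^ (d+4)) ^ card T = (1/2) ^ ((d+4) * card T)" by (rule power_mult[symmetric])
      also have "(d+4) * card T = (d+1) * card T + 3 * card T" by (simp add: algebra_simps)
      also have "(1/2::real) ^ ((d+1) * card T + 3 * card T) = (1/2) ^ ((d+1) * card T) * (1/2) ^ (3 * card T)"
        by (rule power_add)
      also have "(1/2::real) ^ ((d+1) * card T) = x ^ card T" unfolding x_def by (rule power_mult)
      finally show ?thesis .
    qed
    also have "\<dots> \<le> x ^ card T * (1/2) ^ (j + L)"
      by (rule mult_left_mono[OF power_decreasing]) (use cT T1(3) x0 in auto)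
    also have "\<dots> = h j T" unfolding h_def using TC by simp
    also have "\<dots> \<le> (\<Sum>j\<le>length w. h j T)"
      by (rule member_le_sum) (use jle hnn in auto)
    finally show ?thesis .
  qed
  have inner: "(\<Sum>T\<in>\<T>. h j T) \<le> (1/2) ^ (j + L)" for j
  proof -
    have "(\<Sum>T\<in>\<T>. h j T) = (\<Sum>T\<in>\<T> \<inter> Cj j. h j T)"
      by (rule sum.mono_neutral_right[OF finTT]) (auto simp: h_def)
    also have "\<dots> \<le> (\<Sum>T\<in>Cj j. h j T)"
      by (rule sum_mono2) (auto simp: Cj_def Cl_finite hnn)
    also have "\<dots> = (\<Sum>T\<in>Cj j. x ^ card T) * (1/2) ^ (j + L)"
      unfolding h_def by (simp add: sum_distrib_right)
    also have "\<dots> \<le> 1 * (1/2) ^ (j + L)"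
      by (rule mult_right_mono) (use Cl_sum_le1[OF x0] in \<open>auto simp: Cj_def x_def\<close>)
    finally show ?thesis by simp
  qed
  have "(\<Sum>T\<in>\<T>. e ^ card T) \<le> (\<Sum>T\<in>\<T>. \<Sum>j\<le>length w. h j T)"
    by (rule sum_mono) (rule ex)
  also have "\<dots> = (\<Sum>j\<le>length w. \<Sum>T\<in>\<T>. h j T)" by (rule sum.swap)
  also have "\<dots> \<le> (\<Sum>j\<le>length w. (1/2) ^ (j + L))" by (rule sum_mono) (rule inner)
  also have "\<dots> = (1/2) ^ L * (\<Sum>j\<le>length w. (1/2) ^ j)"
    by (simp add: power_add sum_distrib_left mult.commute)
  also have "\<dots> \<le> (1/2) ^ L * 2"
    by (rule mult_left_mono) (auto simp: geom_half)
  finally show ?thesis by simp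
qed



context gsetup
begin

lemma bad_bound:
  assumes W: "finite W" and U: "finite U"
    and eps: "eps2 \<le> (1/2) ^ (d+4)"
  shows "infsum ww {x \<in> Conf (ball d n) \<times> Conf (ball d n). Kset d \<omega>0 U x \<inter> W \<noteq> {}}
     \<le> real (card W) * (2 * (1/2) ^ set_dist d W U) * (infsum w (Conf (ball d n)))\<^sup>2"
proof -
  let ?L = "ball d n"
  let ?C = "Conf ?L"
  let ?Z = "infsum w ?C"
  have L: "?L \<subseteq> tree_V d" "finite ?L" using ball_sub ball_finite by auto
  define TT where "TT wv = {T. T \<subseteq> ?L \<and> conn_from d wv T \<and> T \<inter> U \<noteq> {}}" for wv
  define Q where "Q wvT = {x \<in> ?C \<times> ?C. Cw d \<omega>0 (fst wvT) x = snd wvT}" for wvT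
  define I where "I = Sigma W TT"
  have finTT: "finite (TT wv)" for wv
    by (rule finite_subset[of _ "Pow ?L"]) (use L in \<open>auto simp: TT_def\<close>)
  have finI: "finite I" unfolding I_def using W finTT by auto
  have Csm: "ww summable_on ?C \<times> ?C" by (rule ww_summable[OF L])
  have Qsm: "ww summable_on Q i" for i
    using Csm by (rule summable_on_subset_banach) (auto simp: Q_def)
  have sub: "{x \<in> ?C \<times> ?C. Kset d \<omega>0 U x \<inter> W \<noteq> {}} \<subseteq> (\<Union>i\<in>I. Q i)"
  proof
    fix x assume x: "x \<in> {x \<in> ?C \<times> ?C. Kset d \<omega>0 U x \<inter> W \<noteq> {}}"
    then obtain wv where wv: "wv \<in> W" "wv \<in> Kset d \<omega>0 U x" by auto
    from wv(2) obtain u where u: "u \<in> U" "u \<in> Gs \<omega>0 x" "(u,wv) \<in> (gadj d (Gs \<omega>0 x))\<^sup>*"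
      unfolding Kset_def by blast
    have wvG: "wv \<in> Gs \<omega>0 x" using u gadj_rtrancl_in by blast
    define T where "T = Cw d \<omega>0 wv x"
    have c: "fst x \<in> ?C" "snd x \<in> ?C" using x by auto
    have "T \<subseteq> ?L" unfolding T_def using Cw_sub Gs_sub[OF c] by blast
    moreover have "conn_from d wv T" unfolding T_def by (rule Cw_conn[OF wvG])
    moreover have "u \<in> T" unfolding T_def Cw_def using wvG gadj_rtrancl_sym[OF u(3)] by auto
    ultimately have "T \<in> TT wv" unfolding TT_def using u(1) by auto
    then have "(wv, T) \<in> I" unfolding I_def using wv(1) by auto
    moreover have "x \<in> Q (wv, T)" unfolding Q_def T_def using x by auto
    ultimately show "x \<in> (\<Union>i\<in>I. Q i)" by blast
  qed
  have U1: "ww summable_on (\<Union>i\<in>I. Q i) \<and> infsum ww (\<Union>i\<in>I. Q i) \<le> (\<Sum>i\<in>I. infsum ww (Q i))"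
    by (rule infsum_Union_le[OF finI ww_nn Qsm])
  have "infsum ww {x \<in> ?C \<times> ?C. Kset d \<omega>0 U x \<inter> W \<noteq> {}} \<le> infsum ww (\<Union>i\<in>I. Q i)"
    by (rule infsum_le_subset[OF _ sub]) (use U1 ww_nn in auto)
  also have "\<dots> \<le> (\<Sum>i\<in>I. infsum ww (Q i))" using U1 by blast
  also have "\<dots> \<le> (\<Sum>i\<in>I. eps2 ^ card (snd i) * ?Z\<^sup>2)"
  proof (rule sum_mono)
    fix i assume i: "i \<in> I"
    have "snd i \<subseteq> ?L" using i unfolding I_def TT_def by auto
    then show "infsum ww (Q i) \<le> eps2 ^ card (snd i) * ?Z\<^sup>2"
      unfolding Q_def by (rule peierls[OF L])
  qed
  also have "\<dots> = (\<Sum>(wv,T)\<in>Sigma W TT. eps2 ^ card T * ?Z\<^sup>2)"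
    unfolding I_def by (simp add: case_prod_beta)
  also have "\<dots> = (\<Sum>wv\<in>W. \<Sum>T\<in>TT wv. eps2 ^ card T * ?Z\<^sup>2)"
    by (rule sum.Sigma[symmetric]) (use W finTT in auto)
  also have "\<dots> = (\<Sum>wv\<in>W. \<Sum>T\<in>TT wv. ?Z\<^sup>2 * eps2 ^ card T)"
    by (simp add: mult.commute)
  also have "\<dots> = ?Z\<^sup>2 * (\<Sum>wv\<in>W. \<Sum>T\<in>TT wv. eps2 ^ card T)"
    by (simp add: sum_distrib_left)
  also have "\<dots> \<le> ?Z\<^sup>2 * (\<Sum>wv\<in>W. 2 * (1/2) ^ set_dist d W U)"
  proof (rule mult_left_mono[OF sum_mono])
    fix wv assume wv: "wv \<in> W"
    have e0: "0 \<le> eps2" unfolding eps2_def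
      by (rule infsum_nonneg) (auto intro: mult_nonneg_nonneg rho_nonneg)
    show "(\<Sum>T\<in>TT wv. eps2 ^ card T) \<le> 2 * (1/2) ^ set_dist d W U"
    proof (rule tsum_bound[OF e0 eps])
      fix T assume T: "T \<in> TT wv"
      then obtain u where u: "u \<in> T" "u \<in> U" unfolding TT_def by auto
      have T1: "T \<subseteq> ?L" "conn_from d wv T" using T unfolding TT_def by auto
      have "finite T" using T1(1) L(2) by (rule finite_subset)
      then have "gdist d wv u \<le> 2 * card T" by (rule gdist_le[OF _ T1(2) u(1)])
      moreover have "set_dist d W U \<le> gdist d wv u" by (rule set_dist_le[OF W U wv u(2)])
      ultimately show "T \<subseteq> ?L \<and> conn_from d wv T \<and> set_dist d W U \<le> 2 * card T" using T1 by linarith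
    qed
  qed simp
  also have "\<dots> = real (card W) * (2 * (1/2) ^ set_dist d W U) * ?Z\<^sup>2" by simp
  finally show ?thesis .
qed

lemma cov_n:
  assumes W: "finite W" and U: "finite U" and WU: "W \<inter> U = {}"
    and A: "A \<in> F_sets d W" and B: "B \<in> F_sets d U"
    and eps: "eps2 \<le> (1/2) ^ (d+4)"
  shows "\<bar>gibbs_prob d p \<beta> \<omega>0 (ball d n) (A \<inter> B) - gibbs_prob d p \<beta> \<omega>0 (ball d n) A * gibbs_prob d p \<beta> \<omega>0 (ball d n) B\<bar>
     \<le> real (card W) * (2 * (1/2) ^ set_dist d W U)"
proof -
  let ?L = "ball d n"
  let ?C = "Conf ?L"
  let ?Z = "infsum w ?C"
  have L: "?L \<subseteq> tree_V d" "finite ?L" using ball_sub ball_finite by auto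
  have Z1: "?Z \<ge> 1" by (rule Z_ge1[OF L])
  have eq: "gibbs_prob d p \<beta> \<omega>0 ?L (A \<inter> B) - gibbs_prob d p \<beta> \<omega>0 ?L A * gibbs_prob d p \<beta> \<omega>0 ?L B
     = (infsum w (?C \<inter> (A \<inter> B)) * ?Z - infsum w (?C \<inter> A) * infsum w (?C \<inter> B)) / ?Z\<^sup>2"
    unfolding gibbs_prob_def using Z1 by (simp add: field_simps power2_eq_square)
  have "\<bar>infsum w (?C \<inter> (A \<inter> B)) * ?Z - infsum w (?C \<inter> A) * infsum w (?C \<inter> B)\<bar>
      \<le> real (card W) * (2 * (1/2) ^ set_dist d W U) * ?Z\<^sup>2"
    using cov_switch[OF L A B WU] bad_bound[OF W U eps, of n] by linarith
  then show ?thesis unfolding eq using Z1 by (simp add: abs_div divide_le_eq)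
qed

definition M1 :: real where "M1 = infsum (rho p 1) UNIV"

end

lemma M1_ge1:
  assumes p: "p > 0"
  shows "infsum (rho p 1) UNIV \<ge> 1"
proof -
  have "sum (rho p 1) {0} \<le> infsum (rho p 1) UNIV"
    by (rule finite_sum_le_infsum[OF rho1_summable[OF p]]) (auto simp: rho_nonneg)
  then show ?thesis using rho_zero[OF p] by simp
qed

lemma rho_pair_bound:
  assumes p: "p > 0" and eta: "\<eta> \<ge> 1" and ab: "(a,b) \<noteq> (0::int, 0::int)"
  shows "rho p \<eta> a * rho p \<eta> b \<le> exp (- (\<eta> - 1)) * (rho p 1 a * rho p 1 b)"
proof -
  define s where "s = (real_of_int \<bar>a\<bar>) powr p + (real_of_int \<bar>b\<bar>) powr p"
  have ge1: "x \<noteq> 0 \<Longrightarrow> (real_of_int \<bar>x\<bar>) powr p \<ge> 1" for x :: int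
    using p by (intro ge_one_powr_ge_zero) auto
  have s1: "s \<ge> 1"
  proof (cases "a = 0")
    case True
    then have "b \<noteq> 0" using ab by auto
    then show ?thesis using ge1[of b] powr_ge_zero[of "real_of_int \<bar>a\<bar>" p] unfolding s_def by linarith
  next
    case False
    then show ?thesis using ge1[of a] powr_ge_zero[of "real_of_int \<bar>b\<bar>" p] unfolding s_def by linarith
  qed
  have "rho p \<eta> a * rho p \<eta> b = exp (- \<eta> * s)"
    unfolding rho_def s_def by (simp add: exp_add[symmetric] algebra_simps)
  also have "\<dots> \<le> exp (- (\<eta> - 1) + - s)"
  proof -
    have "0 \<le> (\<eta> - 1) * (s - 1)" using eta s1 by simp
    then show ?thesis by (simp add: algebra_simps)
  qed
  also have "\<dots> = exp (- (\<eta> - 1)) * (rho p 1 a * rho p 1 b)"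
    unfolding rho_def s_def by (simp add: exp_add[symmetric] algebra_simps)
  finally show ?thesis .
qed

context gsetup
begin

lemma eps2_bound: "eps2 \<le> exp (- (\<eta> - 1)) * (infsum (rho p 1) UNIV)\<^sup>2"
proof -
  let ?f = "\<lambda>(a,b). rho p \<eta> a * rho p \<eta> b"
  let ?g = "\<lambda>(a,b). exp (- (\<eta> - 1)) * (rho p 1 a * rho p 1 b)"
  have gsm0: "(\<lambda>(a,b). rho p 1 a * rho p 1 b) summable_on (UNIV \<times> UNIV :: (int \<times> int) set)"
    by (rule pair_summable) (use rho1_summable[OF p0] rho_nonneg in auto)
  have gsm1: "?g summable_on (UNIV \<times> UNIV)"
    using summable_on_cmult_right[OF gsm0, of "exp (- (\<eta> - 1))"] by (simp add: case_prod_beta')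
  have gsm: "?g summable_on (UNIV - {(0,0)})"
    using gsm1 by (rule summable_on_subset_banach) auto
  have "eps2 \<le> infsum ?g (UNIV - {(0,0)})"
    unfolding eps2_def
    by (rule infsum_mono[OF rr_summable gsm]) (use rho_pair_bound[OF p0 eta1] in auto)
  also have "\<dots> \<le> infsum ?g (UNIV \<times> UNIV)"
    by (rule infsum_le_subset[OF gsm1]) (auto simp: case_prod_beta rho_nonneg)
  also have "\<dots> = exp (- (\<eta> - 1)) * infsum (\<lambda>(a,b). rho p 1 a * rho p 1 b) (UNIV \<times> UNIV :: (int \<times> int) set)"
  proof -
    have "infsum ?g (UNIV \<times> UNIV) = infsum (\<lambda>x. exp (- (\<eta> - 1)) * (\<lambda>(a,b). rho p 1 a * rho p 1 b) x) (UNIV \<times> UNIV :: (int \<times> int) set)"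
      by (simp add: case_prod_beta')
    also have "\<dots> = exp (- (\<eta> - 1)) * infsum (\<lambda>(a,b). rho p 1 a * rho p 1 b) (UNIV \<times> UNIV :: (int \<times> int) set)"
      by (rule infsum_cmult_right) (use gsm0 in simp)
    finally show ?thesis .
  qed
  also have "\<dots> = exp (- (\<eta> - 1)) * (infsum (rho p 1) UNIV)\<^sup>2"
    by (subst pair_infsum) (use rho1_summable[OF p0] rho_nonneg in \<open>auto simp: power2_eq_square\<close>)
  finally show ?thesis .
qed

end



lemma half_pow_exp: "exp (- ln 2 * real L) = (1/2::real) ^ L"
proof -
  have "exp (- ln 2 * real L) = inverse (exp (real L * ln 2))" by (simp add: exp_minus[symmetric] mult.commute)
  also have "exp (real L * ln 2) = 2 ^ L" by (simp add: exp_of_nat_mult)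
  finally show ?thesis by (simp add: power_one_over inverse_eq_divide)
qed

theorem lemma5:
  fixes d :: nat and p :: real
  assumes "d \<ge> 1" and "p > 0"
  shows "\<exists>\<eta>1::real. \<forall>\<eta> \<ge> \<eta>1. \<forall>(\<omega>0 :: nat list \<Rightarrow> int) (\<beta>::real) (\<mu> :: (nat list \<Rightarrow> int) measure).
    (\<omega>0 \<in> config_space d \<and> \<beta> > 0 \<and>
     (\<forall>\<omega> \<in> config_space d. finite {v. \<omega> v \<noteq> \<omega>0 v} \<longrightarrow>
        \<beta> * H_diff d p \<omega> \<omega>0 \<ge> \<eta> * (\<Sum>v\<in>{v. \<omega> v \<noteq> \<omega>0 v}. real_of_int \<bar>\<omega> v - \<omega>0 v\<bar> powr p)) \<and>
     prob_space \<mu> \<and> sets \<mu> = sets (config_M d) \<and>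
     (\<forall>W A. finite W \<and> W \<subseteq> tree_V d \<and> A \<in> F_sets d W \<longrightarrow>
        (\<lambda>n. gibbs_prob d p \<beta> \<omega>0 (ball d n) A) \<longlonglongrightarrow> measure \<mu> A))
    \<longrightarrow>
    (\<exists>C > 0. \<exists>c > 0. \<forall>W U A B.
       finite W \<and> finite U \<and> W \<subseteq> tree_V d \<and> U \<subseteq> tree_V d \<and> W \<inter> U = {} \<and>
       polymer_event d \<omega>0 W A \<and> polymer_event d \<omega>0 U B \<longrightarrow>
       \<bar>measure \<mu> (A \<inter> B) - measure \<mu> A * measure \<mu> B\<bar>
         \<le> exp (C * real (card W) * exp (- c * real (set_dist d W U))) - 1)"
proof -
  define M where "M = infsum (rho p 1) UNIV"
  have M1: "M \<ge> 1" unfolding M_def by (rule M1_ge1[OF assms(2)])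
  define \<eta>1 where "\<eta>1 = 1 + ln (M\<^sup>2 * 2 ^ (d+4))"
  have K1: "M\<^sup>2 * 2 ^ (d+4) \<ge> 1"
  proof -
    have "1 \<le> M\<^sup>2" using M1 by (simp add: one_le_power)
    moreover have "(1::real) \<le> 2 ^ (d+4)" by (rule one_le_power) simp
    ultimately show ?thesis using mult_mono[of 1 "M\<^sup>2" 1 "2^(d+4)"] by simp
  qed
  have eta1_ge: "\<eta>1 \<ge> 1" unfolding \<eta>1_def using K1 by simp
  show ?thesis
  proof (rule exI[of _ \<eta>1], intro allI impI)
    fix \<eta> :: real and \<omega>0 :: "nat list \<Rightarrow> int" and \<beta> :: real and \<mu> :: "(nat list \<Rightarrow> int) measure"
    assume eta: "\<eta> \<ge> \<eta>1"
    assume H: "\<omega>0 \<in> config_space d \<and> \<beta> > 0 \<and>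
     (\<forall>\<omega> \<in> config_space d. finite {v. \<omega> v \<noteq> \<omega>0 v} \<longrightarrow>
        \<beta> * H_diff d p \<omega> \<omega>0 \<ge> \<eta> * (\<Sum>v\<in>{v. \<omega> v \<noteq> \<omega>0 v}. real_of_int \<bar>\<omega> v - \<omega>0 v\<bar> powr p)) \<and>
     prob_space \<mu> \<and> sets \<mu> = sets (config_M d) \<and>
     (\<forall>W A. finite W \<and> W \<subseteq> tree_V d \<and> A \<in> F_sets d W \<longrightarrow>
        (\<lambda>n. gibbs_prob d p \<beta> \<omega>0 (ball d n) A) \<longlonglongrightarrow> measure \<mu> A)"
    interpret G: gsetup d p \<eta> \<beta> \<omega>0
      by unfold_locales (use assms eta eta1_ge H in auto)
    have lim: "\<And>W A. finite W \<Longrightarrow> W \<subseteq> tree_V d \<Longrightarrow> A \<in> F_sets d W \<Longrightarrow>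
        (\<lambda>n. gibbs_prob d p \<beta> \<omega>0 (ball d n) A) \<longlonglongrightarrow> measure \<mu> A"
      using H by blast
    have eps: "G.eps2 \<le> (1/2) ^ (d+4)"
    proof -
      have "G.eps2 \<le> exp (- (\<eta> - 1)) * M\<^sup>2" using G.eps2_bound unfolding M_def .
      also have "\<dots> \<le> exp (- ln (M\<^sup>2 * 2 ^ (d+4))) * M\<^sup>2"
        by (rule mult_right_mono) (use eta in \<open>auto simp: \<eta>1_def\<close>)
      also have "\<dots> = inverse (M\<^sup>2 * 2 ^ (d+4)) * M\<^sup>2"
        using K1 by (simp add: exp_minus)
      also have "\<dots> = (1/2) ^ (d+4)"
        using M1 by (simp add: field_simps power_one_over)
      finally show ?thesis .
    qed
    have main: "\<forall>W U A B.
       finite W \<and> finite U \<and> W \<subseteq> tree_V d \<and> U \<subseteq> tree_V d \<and> W \<inter> U = {} \<and>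
       polymer_event d \<omega>0 W A \<and> polymer_event d \<omega>0 U B \<longrightarrow>
       \<bar>measure \<mu> (A \<inter> B) - measure \<mu> A * measure \<mu> B\<bar>
         \<le> exp (2 * real (card W) * exp (- ln 2 * real (set_dist d W U))) - 1"
    proof (intro allI impI)
      fix W U A B
      assume WU: "finite W \<and> finite U \<and> W \<subseteq> tree_V d \<and> U \<subseteq> tree_V d \<and> W \<inter> U = {} \<and>
       polymer_event d \<omega>0 W A \<and> polymer_event d \<omega>0 U B"
      have A: "A \<in> F_sets d W" and B: "B \<in> F_sets d U" using WU unfolding polymer_event_def by auto
      have AB: "A \<inter> B \<in> F_sets d (W \<union> U)"
      proof -
        obtain BA where BA: "A = {\<omega> \<in> config_space d. restrict \<omega> W \<in> BA}" using A unfolding F_sets_def by blast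
        obtain BB where BB: "B = {\<omega> \<in> config_space d. restrict \<omega> U \<in> BB}" using B unfolding F_sets_def by blast
        have "A \<inter> B = {\<omega> \<in> config_space d. restrict \<omega> (W \<union> U) \<in> {f. restrict f W \<in> BA \<and> restrict f U \<in> BB}}"
          unfolding BA BB by (auto simp: restrict_restrict Int_absorb1)
        then show ?thesis unfolding F_sets_def by blast
      qed
      let ?L = "set_dist d W U"
      let ?K = "real (card W) * (2 * (1/2) ^ ?L)"
      have l1: "(\<lambda>n. gibbs_prob d p \<beta> \<omega>0 (ball d n) A) \<longlonglongrightarrow> measure \<mu> A"
        using lim[of W A] WU A by blast
      have l2: "(\<lambda>n. gibbs_prob d p \<beta> \<omega>0 (ball d n) B) \<longlonglongrightarrow> measure \<mu> B"
        using lim[of U B] WU B by blast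
      have l3: "(\<lambda>n. gibbs_prob d p \<beta> \<omega>0 (ball d n) (A \<inter> B)) \<longlonglongrightarrow> measure \<mu> (A \<inter> B)"
        using lim[of "W \<union> U" "A \<inter> B"] WU AB by blast
      have lt: "(\<lambda>n. \<bar>gibbs_prob d p \<beta> \<omega>0 (ball d n) (A \<inter> B) - gibbs_prob d p \<beta> \<omega>0 (ball d n) A * gibbs_prob d p \<beta> \<omega>0 (ball d n) B\<bar>)
          \<longlonglongrightarrow> \<bar>measure \<mu> (A \<inter> B) - measure \<mu> A * measure \<mu> B\<bar>"
        by (intro tendsto_rabs tendsto_diff tendsto_mult l1 l2 l3)
      have "\<bar>measure \<mu> (A \<inter> B) - measure \<mu> A * measure \<mu> B\<bar> \<le> ?K"
        by (rule LIMSEQ_le_const2[OF lt]) (use G.cov_n[OF _ _ _ A B eps] WU in blast)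
      also have "?K = 2 * real (card W) * exp (- ln 2 * real ?L)"
        using half_pow_exp[of ?L] by simp
      also have "\<dots> \<le> exp (2 * real (card W) * exp (- ln 2 * real ?L)) - 1"
        using exp_ge_add_one_self[of "2 * real (card W) * exp (- ln 2 * real ?L)"] by linarith
      finally show "\<bar>measure \<mu> (A \<inter> B) - measure \<mu> A * measure \<mu> B\<bar>
         \<le> exp (2 * real (card W) * exp (- ln 2 * real ?L)) - 1" .
    qed
    show "\<exists>C > 0. \<exists>c > 0. \<forall>W U A B.
       finite W \<and> finite U \<and> W \<subseteq> tree_V d \<and> U \<subseteq> tree_V d \<and> W \<inter> U = {} \<and>
       polymer_event d \<omega>0 W A \<and> polymer_event d \<omega>0 U B \<longrightarrow>
       \<bar>measure \<mu> (A \<inter> B) - measure \<mu> A * measure \<mu> B\<bar>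
         \<le> exp (C * real (card W) * exp (- c * real (set_dist d W U))) - 1"
      apply (rule exI[where x=2])
      apply (rule conjI)
       apply simp
      apply (rule exI[where x="ln 2"])
      using main by simp
  qed
qed


end
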